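(* Let $1\leq a_1\leq\cdots\leq a_k$, $k\geq 3$, be a partition of a natural number $n$ such that $a_{k-1}\leq a_k-2$. Then $$S(a_1,\dots,a_{k-2},a_{k-1},a_k)\prec S(a_1,\dots,a_{k-2},a_{k-1}+1,a_k-1).$$
   Context: $M_k(G)$ denotes the number of closed walks of length $k$ in a graph $G$. For graphs $G,H$, $G\prec H$ means $M_k(G)\leq M_k(H)$ for all $k\geq 0$ with strict inequality for at least one $k$. For positive integers $a_1,\dots,a_k$, the starlike tree $S(a_1,\dots,a_k)$ is obtained from disjoint paths $P_{a_1+1},\dots,P_{a_k+1}$ ($P_m$ the path on $m$ vertices) by identifying one end vertex of each path into a single vertex (the center); the resulting pendant paths from the center are the branches, of lengths $a_1,\dots,a_k$. *)

theory Defs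
  imports Main
begin

definition closed_walks :: "'a set \<Rightarrow> ('a \<Rightarrow> 'a \<Rightarrow> bool) \<Rightarrow> nat \<Rightarrow> 'a list set" where
  "closed_walks V adj k = {xs. length xs = Suc k \<and> set xs \<subseteq> V \<and>
      (\<forall>i<k. adj (xs ! i) (xs ! Suc i)) \<and> hd xs = last xs}"

definition M :: "'a set \<Rightarrow> ('a \<Rightarrow> 'a \<Rightarrow> bool) \<Rightarrow> nat \<Rightarrow> nat" where
  "M V adj k = card (closed_walks V adj k)"

definition walk_prec :: "'a set \<times> ('a \<Rightarrow> 'a \<Rightarrow> bool) \<Rightarrow> 'b set \<times> ('b \<Rightarrow> 'b \<Rightarrow> bool) \<Rightarrow> bool"
  (infix "\<prec>\<^sub>W" 50) where
  "G \<prec>\<^sub>W H \<longleftrightarrow> (\<forall>k. M (fst G) (snd G) k \<le> M (fst H) (snd H) k) \<and>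
                   (\<exists>k. M (fst G) (snd G) k < M (fst H) (snd H) k)"

text \<open>Starlike tree S(a_1,...,a_k) for the list as = [a_1,...,a_k]:
center (0,0); branch i (0-based, i < length as) consists of vertices (Suc i, j), 1 <= j <= as!i,
forming the path (0,0) - (Suc i,1) - (Suc i,2) - ... - (Suc i, as!i).\<close>

definition starlike_verts :: "nat list \<Rightarrow> (nat \<times> nat) set" where
  "starlike_verts as = insert (0,0) {(Suc i, j) | i j. i < length as \<and> 1 \<le> j \<and> j \<le> as ! i}"

definition starlike_arc :: "nat \<times> nat \<Rightarrow> nat \<times> nat \<Rightarrow> bool" where
  "starlike_arc u v \<longleftrightarrow> (fst u = fst v \<and> 0 < fst u \<and> snd v = Suc (snd u))
                       \<or> (u = (0,0) \<and> 0 < fst v \<and> snd v = 1)"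

definition starlike_adj :: "nat list \<Rightarrow> nat \<times> nat \<Rightarrow> nat \<times> nat \<Rightarrow> bool" where
  "starlike_adj as u v \<longleftrightarrow> u \<in> starlike_verts as \<and> v \<in> starlike_verts as \<and>
      (starlike_arc u v \<or> starlike_arc v u)"

definition starlike :: "nat list \<Rightarrow> (nat \<times> nat) set \<times> (nat \<times> nat \<Rightarrow> nat \<times> nat \<Rightarrow> bool)" where
  "starlike as = (starlike_verts as, starlike_adj as)"

end

theory Submission
  imports Defs
begin

fun lwalk :: "('a \<Rightarrow> 'a \<Rightarrow> bool) \<Rightarrow> 'a list \<Rightarrow> bool" where
  "lwalk R [] = True"
| "lwalk R [x] = True"
| "lwalk R (x # y # zs) = (R x y \<and> lwalk R (y # zs))"

lemma lwalk_Cons: "lwalk R (x # xs) \<longleftrightarrow> lwalk R xs \<and> (xs \<noteq> [] \<longrightarrow> R x (hd xs))"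
  by (cases xs) auto

lemma lwalk_append:
  "lwalk R (xs @ ys) \<longleftrightarrow> lwalk R xs \<and> lwalk R ys \<and> (xs \<noteq> [] \<longrightarrow> ys \<noteq> [] \<longrightarrow> R (last xs) (hd ys))"
  by (induction xs) (auto simp: lwalk_Cons)

lemma lwalk_nth: "lwalk R xs \<longleftrightarrow> (\<forall>i. Suc i < length xs \<longrightarrow> R (xs ! i) (xs ! Suc i))"
proof (induction xs)
  case Nil then show ?case by simp
next
  case (Cons x xs)
  show ?case
  proof
    assume "lwalk R (x # xs)"
    then show "\<forall>i. Suc i < length (x # xs) \<longrightarrow> R ((x # xs) ! i) ((x # xs) ! Suc i)"
      using Cons by (auto simp: lwalk_Cons hd_conv_nth nth_Cons split: nat.splits)
  next
    assume H: "\<forall>i. Suc i < length (x # xs) \<longrightarrow> R ((x # xs) ! i) ((x # xs) ! Suc i)"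
    have "\<forall>i. Suc i < length xs \<longrightarrow> R (xs ! i) (xs ! Suc i)"
      using H by (metis Suc_less_eq length_Cons nth_Cons_Suc)
    moreover have "xs \<noteq> [] \<longrightarrow> R x (hd xs)" using H by (auto simp: hd_conv_nth)
    ultimately show "lwalk R (x # xs)" using Cons by (simp add: lwalk_Cons)
  qed
qed

lemma lwalk_mono: "lwalk R xs \<Longrightarrow> (\<And>u v. u \<in> set xs \<Longrightarrow> v \<in> set xs \<Longrightarrow> R u v \<Longrightarrow> S u v) \<Longrightarrow> lwalk S xs"
  by (induction R xs rule: lwalk.induct) auto

lemma lwalk_map: "lwalk R xs \<Longrightarrow> (\<And>u v. u \<in> set xs \<Longrightarrow> v \<in> set xs \<Longrightarrow> R u v \<Longrightarrow> S (f u) (f v)) \<Longrightarrow> lwalk S (map f xs)"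
  by (induction R xs rule: lwalk.induct) auto

lemma lwalk_rev: "(\<And>u v. R u v \<Longrightarrow> R v u) \<Longrightarrow> lwalk R xs \<Longrightarrow> lwalk R (rev xs)"
  by (induction R xs rule: lwalk.induct) (auto simp: lwalk_append)

definition cyc :: "('a \<Rightarrow> 'a \<Rightarrow> bool) \<Rightarrow> 'a list \<Rightarrow> bool" where
  "cyc R c \<longleftrightarrow> c \<noteq> [] \<and> lwalk R (c @ [hd c])"

lemma cyc_rotate1: assumes "cyc R c" shows "cyc R (rotate1 c)"
proof (cases c)
  case Nil then show ?thesis using assms by (simp add: cyc_def)
next
  case (Cons x xs)
  then show ?thesis using assms
    by (cases xs) (auto simp: cyc_def lwalk_append lwalk_Cons hd_append)
qed

lemma cyc_rotate: "cyc R c \<Longrightarrow> cyc R (rotate n c)"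
  by (induction n) (auto simp: cyc_rotate1)

definition CW :: "'a set \<Rightarrow> ('a \<Rightarrow> 'a \<Rightarrow> bool) \<Rightarrow> nat \<Rightarrow> 'a list set" where
  "CW V R L = {c. length c = L \<and> set c \<subseteq> V \<and> cyc R c}"

lemma card_closed_walks_CW:
  assumes "L \<ge> 1"
  shows "card (closed_walks V R L) = card (CW V R L)"
proof -
  have "bij_betw (\<lambda>c. c @ [hd c]) (CW V R L) (closed_walks V R L)"
  proof (rule bij_betw_byWitness[where f' = butlast])
    show "\<forall>c\<in>CW V R L. butlast (c @ [hd c]) = c" by simp
    show "\<forall>xs\<in>closed_walks V R L. butlast xs @ [hd (butlast xs)] = xs"
    proof
      fix xs assume "xs \<in> closed_walks V R L"
      then have xs: "length xs = Suc L" "hd xs = last xs" by (auto simp: closed_walks_def)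
      then have "length (butlast xs) = L" by simp
      then have "xs \<noteq> []" "butlast xs \<noteq> []" using assms xs by (auto simp del: length_butlast)
      then have "hd (butlast xs) = hd xs"
        by (metis append_butlast_last_id hd_append2)
      then show "butlast xs @ [hd (butlast xs)] = xs" using xs \<open>xs \<noteq> []\<close> by simp
    qed
    show "(\<lambda>c. c @ [hd c]) ` CW V R L \<subseteq> closed_walks V R L"
    proof
      fix ys assume "ys \<in> (\<lambda>c. c @ [hd c]) ` CW V R L"
      then obtain c where c: "c \<in> CW V R L" "ys = c @ [hd c]" by auto
      then have "c \<noteq> []" "set c \<subseteq> V" "length c = L" "lwalk R (c @ [hd c])" by (auto simp: CW_def cyc_def)
      then show "ys \<in> closed_walks V R L" using c
        by (auto simp: closed_walks_def lwalk_nth hd_append)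
    qed
    show "butlast ` closed_walks V R L \<subseteq> CW V R L"
    proof
      fix c assume "c \<in> butlast ` closed_walks V R L"
      then obtain xs where xs: "xs \<in> closed_walks V R L" "c = butlast xs" by auto
      then have A: "length xs = Suc L" "hd xs = last xs" "set xs \<subseteq> V" "\<forall>i<L. R (xs ! i) (xs ! Suc i)"
        by (auto simp: closed_walks_def)
      have lc: "length c = L" using A xs by simp
      then have ne: "xs \<noteq> []" "c \<noteq> []" using assms A by (auto simp del: length_butlast)
      then have "hd c = hd xs" using xs by (metis append_butlast_last_id hd_append2)
      then have "c @ [hd c] = xs" using A ne xs by simp
      moreover have "set c \<subseteq> V" using A xs by (meson in_set_butlastD subset_iff)
      ultimately show "c \<in> CW V R L" using A xs ne
        by (auto simp: CW_def cyc_def lwalk_nth length_butlast)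
    qed
  qed
  then show ?thesis by (simp add: bij_betw_same_card)
qed

function runmap :: "('a \<Rightarrow> bool) \<Rightarrow> ('a list \<Rightarrow> 'a list) \<Rightarrow> 'a list \<Rightarrow> 'a list" where
  "runmap P f [] = []"
| "runmap P f (z # zs) = (if P z then z # runmap P f zs
     else f (takeWhile (\<lambda>v. \<not> P v) (z # zs)) @ runmap P f (dropWhile (\<lambda>v. \<not> P v) (z # zs)))"
  by pat_completeness auto
termination
  by (relation "measure (\<lambda>(P, f, xs). length xs)") (auto simp: le_imp_less_Suc length_dropWhile_le)

lemma runmap_append_run:
  assumes "u \<noteq> []" "\<forall>v\<in>set u. \<not> P v" "ys = [] \<or> P (hd ys)"
  shows "runmap P f (u @ ys) = f u @ runmap P f ys"
proof -
  obtain z zs where u: "u = z # zs" using assms(1) by (cases u) auto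
  have tw: "takeWhile (\<lambda>v. \<not> P v) (u @ ys) = u"
    using assms by (cases ys) (auto simp: takeWhile_append2)
  have dw: "dropWhile (\<lambda>v. \<not> P v) (u @ ys) = ys"
    using assms by (cases ys) (auto simp: dropWhile_append2)
  show ?thesis using tw dw assms u by simp
qed

lemma runmap_snoc:
  assumes "P t"
  shows "runmap P f (xs @ [t]) = runmap P f xs @ [t]"
  using assms
proof (induction P f xs rule: runmap.induct)
  case (1 P f) then show ?case by simp
next
  case (2 P f z zs)
  show ?case
  proof (cases "P z")
    case True then show ?thesis using 2 by simp
  next
    case False
    show ?thesis
    proof (cases "\<forall>v\<in>set zs. \<not> P v")
      case True
      have "runmap P f ((z # zs) @ [t]) = f (z # zs) @ runmap P f [t]"
        by (rule runmap_append_run) (use True False 2 in auto)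
      moreover have "runmap P f (z # zs) = f (z # zs)"
        using runmap_append_run[of "z # zs" P "[]" f] True False by simp
      ultimately show ?thesis using 2 by simp
    next
      case nT: False
      then obtain w where w: "w \<in> set (z # zs)" "P w" by auto
      have "takeWhile (\<lambda>v. \<not> P v) (z # zs @ [t]) = takeWhile (\<lambda>v. \<not> P v) (z # zs)"
        using takeWhile_append1[of w "z # zs" "\<lambda>v. \<not> P v" "[t]"] w by simp
      moreover have "dropWhile (\<lambda>v. \<not> P v) (z # zs @ [t]) = dropWhile (\<lambda>v. \<not> P v) (z # zs) @ [t]"
        using dropWhile_append1[of w "z # zs" "\<lambda>v. \<not> P v" "[t]"] w by simp
      ultimately show ?thesis using 2 False by simp
    qed
  qed
qed

lemma runmap_pat:
  assumes "\<And>r. set r \<subseteq> A \<Longrightarrow> \<forall>v\<in>set r. \<not> P v \<Longrightarrow> map P (f r) = map P r"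
    and "set xs \<subseteq> A"
  shows "map P (runmap P f xs) = map P xs"
  using assms
proof (induction P f xs rule: runmap.induct)
  case (1 P f) then show ?case by simp
next
  case (2 P f z zs)
  show ?case
  proof (cases "P z")
    case True then show ?thesis using 2 by simp
  next
    case False
    let ?r = "takeWhile (\<lambda>v. \<not> P v) (z # zs)"
    let ?d = "dropWhile (\<lambda>v. \<not> P v) (z # zs)"
    have "map P (f ?r) = map P ?r" by (rule "2.prems") (use "2.prems" in \<open>auto dest: set_takeWhileD\<close>)
    moreover have "set ?d \<subseteq> A" using "2.prems" by (meson order_trans set_dropWhileD subsetI)
    ultimately have "map P (runmap P f (z # zs)) = map P ?r @ map P ?d" using 2 False by simp
    also have "\<dots> = map P (z # zs)" by (metis map_append takeWhile_dropWhile_id)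
    finally show ?thesis .
  qed
qed

lemma runmap_set:
  assumes "\<And>r. set r \<subseteq> A \<Longrightarrow> \<forall>v\<in>set r. \<not> P v \<Longrightarrow> set (f r) \<subseteq> A"
    and "set xs \<subseteq> A"
  shows "set (runmap P f xs) \<subseteq> A"
  using assms
proof (induction P f xs rule: runmap.induct)
  case (1 P f) then show ?case by simp
next
  case (2 P f z zs)
  let ?r = "takeWhile (\<lambda>v. \<not> P v) (z # zs)"
  let ?d = "dropWhile (\<lambda>v. \<not> P v) (z # zs)"
  have "set ?r \<subseteq> A" using "2.prems"(2) set_takeWhileD by fastforce
  moreover have "set ?d \<subseteq> A" using "2.prems"(2) set_dropWhileD by fastforce
  moreover have "\<forall>v\<in>set ?r. \<not> P v" by (metis (mono_tags, lifting) set_takeWhileD)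
  moreover have "set (f ?r) \<subseteq> A" using "2.prems"(1)[OF calculation(1) calculation(3)] .
  ultimately show ?case using 2 by (simp del: takeWhile.simps dropWhile.simps)
qed

definition Dw :: "'a set \<Rightarrow> ('a \<Rightarrow> 'a \<Rightarrow> bool) \<Rightarrow> 'a \<Rightarrow> 'a list set" where
  "Dw K R z = {r. r \<noteq> [] \<and> set r \<subseteq> K \<and> lwalk R r \<and> hd r = z \<and> last r = z}"

locale bridge =
  fixes V K T :: "'a set" and adj1 adj2 :: "'a \<Rightarrow> 'a \<Rightarrow> bool" and x y t :: 'a
    and phi psi :: "'a list \<Rightarrow> 'a list"
  assumes finV: "finite V" and VKT: "V = K \<union> T" and disj: "K \<inter> T = {}"
    and xK: "x \<in> K" and yK: "y \<in> K" and tT: "t \<in> T"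
    and adj1V: "adj1 u v \<Longrightarrow> u \<in> V \<and> v \<in> V"
    and adj2V: "adj2 u v \<Longrightarrow> u \<in> V \<and> v \<in> V"
    and sym1: "adj1 u v \<Longrightarrow> adj1 v u"
    and sym2: "adj2 u v \<Longrightarrow> adj2 v u"
    and agreeK: "u \<in> K \<Longrightarrow> v \<in> K \<Longrightarrow> adj1 u v = adj2 u v"
    and agreeT: "u \<in> T \<Longrightarrow> v \<in> T \<Longrightarrow> adj1 u v = adj2 u v"
    and cross1: "u \<in> K \<Longrightarrow> v \<in> T \<Longrightarrow> adj1 u v \<longleftrightarrow> u = x \<and> v = t"
    and cross2: "u \<in> K \<Longrightarrow> v \<in> T \<Longrightarrow> adj2 u v \<longleftrightarrow> u = y \<and> v = t"
    and phiK: "set r \<subseteq> K \<Longrightarrow> set (phi r) \<subseteq> K \<and> length (phi r) = length r"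
    and phiD: "r \<in> Dw K adj1 x \<Longrightarrow> phi r \<in> Dw K adj1 y"
    and psiphi: "r \<in> Dw K adj1 x \<Longrightarrow> psi (phi r) = r"
begin

abbreviation "RM f \<equiv> runmap (\<lambda>v. v \<in> T) f"

lemma map_allF: "\<forall>v\<in>set xs. \<not> P v \<Longrightarrow> map P xs = replicate (length xs) False"
  by (induction xs) auto

lemma lwalk_K12: "lwalk adj1 r \<Longrightarrow> set r \<subseteq> K \<Longrightarrow> lwalk adj2 r"
  by (erule lwalk_mono) (use agreeK in auto)

lemma phi_pat: "set r \<subseteq> V \<Longrightarrow> \<forall>v\<in>set r. v \<notin> T \<Longrightarrow> map (\<lambda>v. v \<in> T) (phi r) = map (\<lambda>v. v \<in> T) r"
proof -
  assume a: "set r \<subseteq> V" "\<forall>v\<in>set r. v \<notin> T"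
  then have "set r \<subseteq> K" using VKT by auto
  then have "set (phi r) \<subseteq> K" "length (phi r) = length r" using phiK by auto
  moreover have "\<forall>v\<in>set (phi r). v \<notin> T" using calculation(1) disj by blast
  ultimately show ?thesis using a(2) map_allF[of "phi r" "\<lambda>v. v \<in> T"] map_allF[of r "\<lambda>v. v \<in> T"]
    by simp
qed

lemma RM_pat: "set w \<subseteq> V \<Longrightarrow> map (\<lambda>v. v \<in> T) (RM phi w) = map (\<lambda>v. v \<in> T) w"
  by (rule runmap_pat[where A = V]) (use phi_pat in auto)

lemma RM_len: "set w \<subseteq> V \<Longrightarrow> length (RM phi w) = length w"
  using RM_pat by (metis length_map)

lemma RM_set: "set w \<subseteq> V \<Longrightarrow> set (RM phi w) \<subseteq> V"
proof (rule runmap_set[where A = V])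
  fix r assume "set r \<subseteq> V" "\<forall>v\<in>set r. v \<notin> T"
  then have "set r \<subseteq> K" using VKT by auto
  then show "set (phi r) \<subseteq> V" using phiK VKT by auto
qed

lemma adj1_TK: "adj1 u v \<Longrightarrow> u \<in> T \<Longrightarrow> v \<in> K \<Longrightarrow> u = t \<and> v = x"
  using cross1 sym1 by blast

lemma good_runmap:
  assumes "lwalk adj1 w" "set w \<subseteq> V" "w \<noteq> []" "last w \<in> T" "hd w \<notin> T \<Longrightarrow> hd w = x"
  shows "lwalk adj2 (RM phi w) \<and> RM phi w \<noteq> [] \<and> hd (RM phi w) = (if hd w \<in> T then hd w else y)
         \<and> RM psi (RM phi w) = w"
  using assms
proof (induction "length w" arbitrary: w rule: less_induct)
  case less
  obtain z zs where w: "w = z # zs" using less.prems by (cases w) auto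
  show ?case
  proof (cases "z \<in> T")
    case True
    show ?thesis
    proof (cases "zs = []")
      case True
      then show ?thesis using w \<open>z \<in> T\<close> by simp
    next
      case False
      have a1: "adj1 z (hd zs)" using less.prems(1) w False by (simp add: lwalk_Cons)
      have hzs: "hd zs \<notin> T \<Longrightarrow> hd zs = x"
      proof -
        assume "hd zs \<notin> T"
        then have "hd zs \<in> K" using less.prems(2) w hd_in_set[OF False] VKT by auto
        then show "hd zs = x" using adj1_TK[OF a1 True] by simp
      qed
      have IH: "lwalk adj2 (RM phi zs) \<and> RM phi zs \<noteq> [] \<and> hd (RM phi zs) = (if hd zs \<in> T then hd zs else y)
         \<and> RM psi (RM phi zs) = zs"
        using less.hyps[of zs] less.prems w False hzs by (auto simp: lwalk_Cons)
      have "adj2 z (hd (RM phi zs))"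
      proof (cases "hd zs \<in> T")
        case True
        then show ?thesis using IH a1 agreeT \<open>z \<in> T\<close> by simp
      next
        case False
        then have "hd zs \<in> K" using less.prems(2) w hd_in_set[OF \<open>zs \<noteq> []\<close>] VKT by auto
        then have "z = t" using adj1_TK[OF a1 \<open>z \<in> T\<close>] by simp
        then show ?thesis using IH False cross2[OF yK tT] sym2 by auto
      qed
      then show ?thesis using IH w True by (simp add: lwalk_Cons)
    qed
  next
    case False
    let ?r = "takeWhile (\<lambda>v. v \<notin> T) w"
    let ?d = "dropWhile (\<lambda>v. v \<notin> T) w"
    have wrd: "w = ?r @ ?d" by simp
    have rne: "?r \<noteq> []" using w False by simp
    have dne: "?d \<noteq> []"
    proof
      assume "?d = []"
      then have "\<forall>v\<in>set w. v \<notin> T" by (simp add: dropWhile_eq_Nil_conv)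
      then show False using less.prems(3,4) by simp
    qed
    have hdT: "hd ?d \<in> T" using dne hd_dropWhile by force
    have rK: "set ?r \<subseteq> K" using less.prems(2) VKT
      by (auto dest: set_takeWhileD)
    have lw: "lwalk adj1 ?r" "lwalk adj1 ?d" "adj1 (last ?r) (hd ?d)"
      using less.prems(1) wrd rne dne lwalk_append by metis+
    have "last ?r \<in> K" using rK rne by auto
    then have lr: "last ?r = x" and hdt: "hd ?d = t" using cross1 lw(3) hdT by auto
    have hr: "hd ?r = x" using less.prems(5) w False by simp
    have rD: "?r \<in> Dw K adj1 x" using rne rK lw hr lr by (simp add: Dw_def)
    then have pD: "phi ?r \<in> Dw K adj1 y" by (rule phiD)
    have len: "length ?d < length w" using rne wrd
      by (metis length_append less_add_same_cancel2 length_greater_0_conv)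
    have dV: "set ?d \<subseteq> V" using less.prems(2) by (meson order_trans set_dropWhileD subsetI)
    have last_d: "last ?d \<in> T" using less.prems(4) dne wrd by (metis last_append)
    have IH: "lwalk adj2 (RM phi ?d) \<and> RM phi ?d \<noteq> [] \<and> hd (RM phi ?d) = t
         \<and> RM psi (RM phi ?d) = ?d"
      using less.hyps[OF len lw(2) dV dne last_d] hdT hdt by simp
    have eq: "RM phi w = phi ?r @ RM phi ?d" using w False by simp
    have pw: "lwalk adj2 (phi ?r)" using pD lwalk_K12 by (auto simp: Dw_def)
    have pne: "phi ?r \<noteq> []" "hd (phi ?r) = y" "last (phi ?r) = y" "set (phi ?r) \<subseteq> K"
      using pD by (auto simp: Dw_def)
    have "adj2 y t" using cross2[OF yK tT] by simp
    then have L1: "lwalk adj2 (RM phi w)" using eq pw IH pne by (simp add: lwalk_append)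
    have "\<forall>v\<in>set (phi ?r). v \<notin> T" using pne(4) disj by auto
    then have "RM psi (RM phi w) = psi (phi ?r) @ RM psi (RM phi ?d)"
      using eq runmap_append_run[of "phi ?r" "\<lambda>v. v \<in> T" "RM phi ?d" psi] pne IH tT
      by simp
    also have "\<dots> = ?r @ ?d" using psiphi[OF rD] IH by simp
    finally have "RM psi (RM phi w) = w" by simp
    then show ?thesis using L1 eq pne False w by simp
  qed
qed

end

context bridge
begin

definition ix :: "'a list \<Rightarrow> nat" where "ix c = length (takeWhile (\<lambda>v. v \<notin> T) c)"

definition Psi :: "'a list \<Rightarrow> 'a list" where
  "Psi c = (if \<exists>v\<in>set c. v \<in> T then rotate (length c - ix c) (RM phi (rotate (ix c) c)) else c)"

abbreviation "pat c \<equiv> map (\<lambda>v. v \<in> T) c"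

lemma ix_pat: "ix c = length (takeWhile (\<lambda>b. \<not> b) (pat c))"
  by (simp add: ix_def takeWhile_map comp_def)

lemma takeWhile_less: "\<exists>v\<in>set xs. \<not> P v \<Longrightarrow> length (takeWhile P xs) < length xs"
  by (induction xs) auto

lemma ix_less: "\<exists>v\<in>set c. v \<in> T \<Longrightarrow> ix c < length c"
  unfolding ix_def by (rule takeWhile_less) auto

lemma ix_T: "\<exists>v\<in>set c. v \<in> T \<Longrightarrow> c ! ix c \<in> T"
  unfolding ix_def using nth_length_takeWhile[of "\<lambda>v. v \<notin> T" c] ix_less[unfolded ix_def] by auto

lemma RM_cyc:
  assumes "cyc adj1 c" "set c \<subseteq> V" "hd c \<in> T"
  shows "cyc adj2 (RM phi c) \<and> set (RM phi c) \<subseteq> V \<and> length (RM phi c) = length c \<and> RM psi (RM phi c) = c"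
proof -
  let ?w = "c @ [hd c]"
  have c0: "c \<noteq> []" using assms by (simp add: cyc_def)
  have g: "lwalk adj2 (RM phi ?w) \<and> RM phi ?w \<noteq> [] \<and> hd (RM phi ?w) = (if hd ?w \<in> T then hd ?w else y)
         \<and> RM psi (RM phi ?w) = ?w"
    by (rule good_runmap) (use assms c0 in \<open>auto simp: cyc_def hd_append\<close>)
  have sn: "RM phi ?w = RM phi c @ [hd c]" using runmap_snoc assms(3) by metis
  have len: "length (RM phi c) = length c" using RM_len assms(2) by simp
  then have ne: "RM phi c \<noteq> []" using c0 by auto
  have h: "hd (RM phi c) = hd c" using g sn ne c0 assms(3) by (simp add: hd_append)
  have "cyc adj2 (RM phi c)" using g sn ne h by (simp add: cyc_def)
  moreover have "RM psi (RM phi c) = c"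
    using g sn runmap_snoc[of "\<lambda>v. v \<in> T" "hd c" psi "RM phi c"] assms(3) by simp
  ultimately show ?thesis using RM_set assms(2) len by simp
qed

lemma rot_back: "length z = L \<Longrightarrow> i \<le> L \<Longrightarrow> rotate (L - i) (rotate i z) = z"
  by (simp add: rotate_rotate)

lemma rot_back2: "length z = L \<Longrightarrow> i \<le> L \<Longrightarrow> rotate i (rotate (L - i) z) = z"
  by (simp add: rotate_rotate)

lemma Psi_CW:
  assumes "c \<in> CW V adj1 L"
  shows "Psi c \<in> CW V adj2 L \<and> pat (Psi c) = pat c"
proof (cases "\<exists>v\<in>set c. v \<in> T")
  case False
  then have cK: "set c \<subseteq> K" using assms VKT by (auto simp: CW_def)
  have c0: "c \<noteq> []" "lwalk adj1 (c @ [hd c])" using assms by (auto simp: CW_def cyc_def)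
  then have "hd c \<in> K" using cK hd_in_set by auto
  then have "lwalk adj2 (c @ [hd c])" using lwalk_K12[of "c @ [hd c]"] cK c0 by auto
  then have "cyc adj2 c" using c0 by (simp add: cyc_def)
  then show ?thesis using False assms by (auto simp: Psi_def CW_def)
next
  case True
  let ?i = "ix c"
  let ?c = "rotate ?i c"
  have c: "length c = L" "set c \<subseteq> V" "cyc adj1 c" using assms by (auto simp: CW_def)
  have il: "?i < L" using ix_less[OF True] c by simp
  have c0: "c \<noteq> []" using c by (simp add: cyc_def)
  have hc: "hd ?c \<in> T" using ix_T[OF True] il c by (simp add: hd_rotate_conv_nth c0)
  have R: "cyc adj2 (RM phi ?c) \<and> set (RM phi ?c) \<subseteq> V \<and> length (RM phi ?c) = length ?c"
    using RM_cyc[OF cyc_rotate[OF c(3)] _ hc] c by simp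
  have P: "pat (RM phi ?c) = pat ?c" using RM_pat c by simp
  have eq: "Psi c = rotate (L - ?i) (RM phi ?c)" using True c by (simp add: Psi_def)
  have "pat (Psi c) = rotate (L - ?i) (pat ?c)" using eq P by (metis rotate_map)
  also have "\<dots> = pat c" using rot_back[of "pat c" L ?i] il c by (simp add: rotate_map)
  finally show ?thesis using R eq c cyc_rotate by (auto simp: CW_def)
qed

lemma Psi_inj: "inj_on Psi (CW V adj1 L)"
proof
  fix c1 c2 assume c1: "c1 \<in> CW V adj1 L" and c2: "c2 \<in> CW V adj1 L" and eq: "Psi c1 = Psi c2"
  have p: "pat c1 = pat c2" using Psi_CW[OF c1] Psi_CW[OF c2] eq by simp
  have hT: "(\<exists>v\<in>set c1. v \<in> T) = (\<exists>v\<in>set c2. v \<in> T)"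
  proof -
    have "(\<exists>v\<in>set c. v \<in> T) = (True \<in> set (pat c))" for c by auto
    then show ?thesis using p by metis
  qed
  show "c1 = c2"
  proof (cases "\<exists>v\<in>set c1. v \<in> T")
    case False
    then show ?thesis using hT eq by (simp add: Psi_def)
  next
    case True
    then have T2: "\<exists>v\<in>set c2. v \<in> T" using hT by simp
    have ii: "ix c1 = ix c2" using p by (simp add: ix_pat)
    let ?i = "ix c1"
    have L: "length c1 = L" "length c2 = L" "set c1 \<subseteq> V" "set c2 \<subseteq> V" "cyc adj1 c1" "cyc adj1 c2"
      using c1 c2 by (auto simp: CW_def)
    have il: "?i < L" using ix_less[OF True] L by simp
    have c0: "c1 \<noteq> []" "c2 \<noteq> []" using L by (auto simp: cyc_def)
    have h1: "hd (rotate ?i c1) \<in> T" using ix_T[OF True] il L by (simp add: hd_rotate_conv_nth c0)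
    have h2: "hd (rotate ?i c2) \<in> T" using ix_T[OF T2] il L ii by (simp add: hd_rotate_conv_nth c0)
    have R1: "length (RM phi (rotate ?i c1)) = L \<and> RM psi (RM phi (rotate ?i c1)) = rotate ?i c1"
      using RM_cyc[OF cyc_rotate[OF L(5)] _ h1] L by simp
    have R2: "length (RM phi (rotate ?i c2)) = L \<and> RM psi (RM phi (rotate ?i c2)) = rotate ?i c2"
      using RM_cyc[OF cyc_rotate[OF L(6)] _ h2] L by simp
    have "rotate (L - ?i) (RM phi (rotate ?i c1)) = rotate (L - ?i) (RM phi (rotate ?i c2))"
      using eq True T2 ii L by (simp add: Psi_def)
    then have e2: "rotate ?i (rotate (L - ?i) (RM phi (rotate ?i c1))) = rotate ?i (rotate (L - ?i) (RM phi (rotate ?i c2)))"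
      by (rule arg_cong)
    have X1: "rotate ?i (rotate (L - ?i) (RM phi (rotate ?i c1))) = RM phi (rotate ?i c1)"
      by (rule rot_back2) (use R1 il in auto)
    have X2: "rotate ?i (rotate (L - ?i) (RM phi (rotate ?i c2))) = RM phi (rotate ?i c2)"
      by (rule rot_back2) (use R2 il in auto)
    have "RM phi (rotate ?i c1) = RM phi (rotate ?i c2)" using e2 X1 X2 by simp
    then have "rotate ?i c1 = rotate ?i c2" using R1 R2 by metis
    then show ?thesis using rot_back[of c1 L ?i] rot_back[of c2 L ?i] L il by (metis less_imp_le)
  qed
qed

lemma finite_CW: "finite (CW V R L)"
proof -
  have "CW V R L \<subseteq> {xs. set xs \<subseteq> V \<and> length xs = L}" by (auto simp: CW_def)
  then show ?thesis using finite_lists_length_eq[OF finV] finite_subset by blast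
qed

lemma CW_le: "card (CW V adj1 L) \<le> card (CW V adj2 L)"
  by (rule card_inj_on_le[OF Psi_inj]) (use Psi_CW finite_CW in auto)

lemma M_le: "M V adj1 L \<le> M V adj2 L"
proof (cases "L = 0")
  case True
  then have "closed_walks V adj1 L = closed_walks V adj2 L" by (simp add: closed_walks_def)
  then show ?thesis by (simp add: M_def)
next
  case False
  then have "M V adj1 L = card (CW V adj1 L)" "M V adj2 L = card (CW V adj2 L)"
    using card_closed_walks_CW[where L=L] by (simp_all add: M_def)
  then show ?thesis using CW_le by simp
qed

lemma M_less:
  assumes s: "s \<in> Dw K adj1 y" "s \<notin> phi ` Dw K adj1 x"
  shows "M V adj1 (Suc (length s)) < M V adj2 (Suc (length s))"
proof -
  let ?L = "Suc (length s)"
  have sp: "s \<noteq> []" "set s \<subseteq> K" "lwalk adj1 s" "hd s = y" "last s = y" using s by (auto simp: Dw_def)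
  have a2: "adj2 t y" "adj2 y t" using cross2[OF yK tT] sym2 by auto
  have zC: "t # s \<in> CW V adj2 ?L"
    using sp a2 lwalk_K12[OF sp(3) sp(2)] VKT tT
    by (auto simp: CW_def cyc_def lwalk_Cons lwalk_append)
  have nz: "t # s \<notin> Psi ` CW V adj1 ?L"
  proof
    assume "t # s \<in> Psi ` CW V adj1 ?L"
    then obtain c where c: "c \<in> CW V adj1 ?L" "Psi c = t # s" by auto
    have p: "pat c = pat (t # s)" using Psi_CW[OF c(1)] c(2) by simp
    obtain c0 cs where cc: "c = c0 # cs" using c(1) by (cases c) (auto simp: CW_def)
    have c0T: "c0 \<in> T" using p cc tT by simp
    have csT: "\<forall>v\<in>set cs. v \<notin> T"
    proof -
      have "pat cs = pat s" using p cc by simp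
      moreover have "\<forall>v\<in>set s. v \<notin> T" using sp(2) disj by auto
      ultimately show ?thesis by (metis map_allF length_map in_set_replicate map_eq_conv)
    qed
    have cprop: "length c = ?L" "set c \<subseteq> V" "cyc adj1 c" using c(1) by (auto simp: CW_def)
    have csne: "cs \<noteq> []" using cprop(1) cc sp(1) by auto
    have ix0: "ix c = 0" using cc c0T by (simp add: ix_def)
    have "length (RM phi c) = ?L" using RM_len cprop by simp
    then have e: "rotate ?L (RM phi c) = RM phi c" by (simp add: rotate_id del: rotate_Suc)
    have "Psi c = RM phi c" using cc c0T cprop(1) e unfolding Psi_def ix0 by auto
    also have "\<dots> = c0 # phi cs"
      using cc c0T runmap_append_run[of cs "\<lambda>v. v \<in> T" "[]" phi] csne csT by simp
    finally have "phi cs = s" using c(2) by simp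
    moreover have "cs \<in> Dw K adj1 x"
    proof -
      have lw: "lwalk adj1 (c0 # cs @ [c0])" using cprop(3) cc by (simp add: cyc_def)
      then have "adj1 c0 (hd cs)" "lwalk adj1 cs" "adj1 (last cs) c0" using csne
        by (auto simp: lwalk_Cons lwalk_append)
      moreover have "set cs \<subseteq> K" using cprop(2) cc csT VKT by auto
      moreover have "hd cs \<in> K" "last cs \<in> K" using calculation(4) csne by auto
      ultimately show ?thesis using adj1_TK cross1 csne c0T
        by (auto simp: Dw_def)
    qed
    ultimately show False using s(2) by auto
  qed
  have "card (CW V adj1 ?L) < card (CW V adj2 ?L)"
  proof -
    have "card (CW V adj1 ?L) = card (Psi ` CW V adj1 ?L)" using Psi_inj by (simp add: card_image)
    also have "\<dots> < card (CW V adj2 ?L)"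
      by (rule psubset_card_mono) (use finite_CW Psi_CW zC nz in auto)
    finally show ?thesis .
  qed
  moreover have "M V adj1 ?L = card (CW V adj1 ?L)" "M V adj2 ?L = card (CW V adj2 ?L)"
    using card_closed_walks_CW[where L="?L"] by (simp_all add: M_def)
  ultimately show ?thesis by simp
qed

end

definition twR :: "('a \<Rightarrow> bool) \<Rightarrow> 'a list \<Rightarrow> 'a list" where "twR P xs = rev (takeWhile P (rev xs))"
definition dwR :: "('a \<Rightarrow> bool) \<Rightarrow> 'a list \<Rightarrow> 'a list" where "dwR P xs = rev (dropWhile P (rev xs))"

lemma dwR_twR: "dwR P xs @ twR P xs = xs"
  unfolding dwR_def twR_def by (metis rev_append rev_rev_ident takeWhile_dropWhile_id)

lemma twR_P: "u \<in> set (twR P xs) \<Longrightarrow> P u"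
  unfolding twR_def by (auto dest: set_takeWhileD)

lemma dwR_last: "dwR P xs \<noteq> [] \<Longrightarrow> \<not> P (last (dwR P xs))"
  unfolding dwR_def by (simp add: last_rev hd_dropWhile)

lemma twR_all: assumes "\<forall>u\<in>set xs. P u" shows "twR P (ys @ xs) = twR P ys @ xs"
proof -
  have "takeWhile P (rev xs @ rev ys) = rev xs @ takeWhile P (rev ys)"
    by (rule takeWhile_append2) (use assms in simp)
  then show ?thesis by (simp add: twR_def)
qed

lemma twR_stop: assumes "ys \<noteq> []" "\<not> P (last ys)" "\<forall>u\<in>set xs. P u" shows "twR P (ys @ xs) = xs"
proof -
  obtain ys' y where y: "ys = ys' @ [y]" using assms(1) by (cases ys rule: rev_cases) auto
  have "takeWhile P (rev xs @ (y # rev ys')) = rev xs @ takeWhile P (y # rev ys')"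
    by (rule takeWhile_append2) (use assms in simp)
  then show ?thesis using y assms(2) by (simp add: twR_def)
qed

lemma dwR_stop: assumes "ys \<noteq> []" "\<not> P (last ys)" "\<forall>u\<in>set xs. P u" shows "dwR P (ys @ xs) = ys"
proof -
  obtain ys' y where y: "ys = ys' @ [y]" using assms(1) by (cases ys rule: rev_cases) auto
  have "dropWhile P (rev xs @ (y # rev ys')) = dropWhile P (y # rev ys')"
    by (rule dropWhile_append2) (use assms in simp)
  then show ?thesis using y assms(2) by (simp add: dwR_def)
qed

lemma dwR_set: "set (dwR P xs) \<subseteq> set xs" and twR_set: "set (twR P xs) \<subseteq> set xs"
  using dwR_twR[of P xs] by (metis Un_upper1 Un_upper2 set_append)+

locale model =
  fixes qs :: "nat list" and a b :: nat
  assumes a1: "1 \<le> a" and ab: "a + 2 \<le> b" and qne: "qs \<noteq> []" and qpos: "\<forall>z\<in>set qs. 1 \<le> z"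
begin

definition "Qv = {(Suc i, j) | i j. i < length qs \<and> 1 \<le> j \<and> j \<le> qs ! i}"
definition "Wv = {(0, i) | i. i \<le> a + b} \<union> Qv"
definition "Kv = {(0, i) | i. i \<le> 2 * a + 1} \<union> Qv"
definition "Tv = {(0, i) | i. 2 * a + 2 \<le> i \<and> i \<le> a + b}"

definition marc :: "nat \<Rightarrow> nat \<times> nat \<Rightarrow> nat \<times> nat \<Rightarrow> bool" where
  "marc e u v \<longleftrightarrow> (fst u = 0 \<and> fst v = 0 \<and> snd v = Suc (snd u) \<and> snd u \<noteq> 2 * a + 1)
     \<or> (u = (0, e) \<and> v = (0, 2 * a + 2))
     \<or> (u = (0, a) \<and> 0 < fst v \<and> snd v = 1)
     \<or> (0 < fst u \<and> fst u = fst v \<and> snd v = Suc (snd u))"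

definition madj :: "nat \<Rightarrow> nat \<times> nat \<Rightarrow> nat \<times> nat \<Rightarrow> bool" where
  "madj e u v \<longleftrightarrow> u \<in> Wv \<and> v \<in> Wv \<and> (marc e u v \<or> marc e v u)"

lemma WKT: "Wv = Kv \<union> Tv" using ab by (auto simp: Wv_def Kv_def Tv_def)
lemma KT: "Kv \<inter> Tv = {}" by (auto simp: Kv_def Tv_def Qv_def)

lemma finW: "finite Wv"
proof -
  have "Qv \<subseteq> {..length qs} \<times> {..Max (set qs)}"
    by (auto simp: Qv_def) (meson List.finite_set Max_ge nth_mem order_trans)
  then have "finite Qv" by (meson finite_SigmaI finite_atMost finite_subset)
  moreover have "{(0::nat, i) | i. i \<le> a + b} = (\<lambda>i. (0, i)) ` {..a + b}" by auto
  ultimately show ?thesis by (simp add: Wv_def)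
qed

lemma marc_e: "v \<noteq> (0, 2 * a + 2) \<Longrightarrow> marc e1 u v = marc e2 u v"
  by (simp add: marc_def)

lemma marc_e': "u \<noteq> (0, e1) \<Longrightarrow> u \<noteq> (0, e2) \<Longrightarrow> marc e1 u v = marc e2 u v"
  by (simp add: marc_def)

lemma notK: "(0, 2 * a + 2) \<notin> Kv" by (auto simp: Kv_def Qv_def)

lemma agreeK: "u \<in> Kv \<Longrightarrow> v \<in> Kv \<Longrightarrow> madj e1 u v = madj e2 u v"
  unfolding madj_def using marc_e[of v e1 u e2] marc_e[of u e1 v e2] notK by metis

lemma agreeT: "e1 \<le> 2 * a + 1 \<Longrightarrow> e2 \<le> 2 * a + 1 \<Longrightarrow> u \<in> Tv \<Longrightarrow> v \<in> Tv \<Longrightarrow> madj e1 u v = madj e2 u v"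
proof -
  assume e: "e1 \<le> 2 * a + 1" "e2 \<le> 2 * a + 1" and uv: "u \<in> Tv" "v \<in> Tv"
  have "w \<noteq> (0, e1)" "w \<noteq> (0, e2)" if "w \<in> Tv" for w using that e by (auto simp: Tv_def)
  then show ?thesis unfolding madj_def using marc_e'[of u e1 e2 v] marc_e'[of v e1 e2 u] uv by metis
qed

lemma cross: "e \<le> 2 * a + 1 \<Longrightarrow> u \<in> Kv \<Longrightarrow> v \<in> Tv \<Longrightarrow> madj e u v \<longleftrightarrow> u = (0, e) \<and> v = (0, 2 * a + 2)"
proof -
  assume e: "e \<le> 2 * a + 1" and u: "u \<in> Kv" and v: "v \<in> Tv"
  obtain i where vi: "v = (0, i)" "2 * a + 2 \<le> i" "i \<le> a + b" using v by (auto simp: Tv_def)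
  have vW: "v \<in> Wv" "u \<in> Wv" using u v WKT by auto
  show ?thesis
  proof (cases "fst u = 0")
    case True
    then obtain j where uj: "u = (0, j)" "j \<le> 2 * a + 1" using u by (auto simp: Kv_def Qv_def)
    show ?thesis using vi uj e vW by (auto simp: madj_def marc_def)
  next
    case False
    then show ?thesis using vi vW by (auto simp: madj_def marc_def)
  qed
qed

end

lemma tw_split:
  assumes "\<forall>u\<in>set xs. P u" "ys \<noteq> []" "\<not> P (hd ys)"
  shows "takeWhile P (xs @ ys) = xs" "dropWhile P (xs @ ys) = ys"
proof -
  obtain y ys' where "ys = y # ys'" using assms(2) by (cases ys) auto
  then show "takeWhile P (xs @ ys) = xs" "dropWhile P (xs @ ys) = ys"
    using assms by (simp_all add: takeWhile_append2 dropWhile_append2)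
qed

context model
begin

abbreviation "A1 \<equiv> madj (2 * a + 1)"

definition rho :: "nat \<times> nat \<Rightarrow> nat \<times> nat" where
  "rho u = (if fst u = 0 \<and> snd u \<le> 2 * a + 1 then (0, 2 * a + 1 - snd u) else u)"
definition "inR u \<longleftrightarrow> fst u = 0 \<and> a < snd u"
definition "inR2 u \<longleftrightarrow> fst u = 0 \<and> Suc a < snd u"
definition "inL u \<longleftrightarrow> fst u = 0 \<and> snd u \<le> a"
definition "inL2 u \<longleftrightarrow> fst u = 0 \<and> snd u < a"

lemma rhoK: "u \<in> Kv \<Longrightarrow> rho u \<in> Kv"
  by (auto simp: rho_def Kv_def)
lemma rho_rho: "u \<in> Kv \<Longrightarrow> rho (rho u) = u"
  by (auto simp: rho_def Kv_def Qv_def)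
lemma rho_R: "u \<in> Kv \<Longrightarrow> inR u \<Longrightarrow> inL (rho u)"
  by (auto simp: rho_def Kv_def Qv_def inR_def inL_def)
lemma rho_R2: "u \<in> Kv \<Longrightarrow> inR2 u \<Longrightarrow> inL2 (rho u)"
  by (auto simp: rho_def Kv_def Qv_def inR2_def inL2_def)
lemma rho_L: "u \<in> Kv \<Longrightarrow> inL u \<Longrightarrow> inR (rho u)"
  by (auto simp: rho_def Kv_def inR_def inL_def)
lemma inR2_R: "inR2 u \<Longrightarrow> inR u" by (simp add: inR2_def inR_def)

lemma A1_sym: "A1 u v \<Longrightarrow> A1 v u" by (auto simp: madj_def)

lemma K_path: "u \<in> Kv \<Longrightarrow> fst u = 0 \<Longrightarrow> snd u \<le> 2 * a + 1"
  by (auto simp: Kv_def Qv_def)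

lemma path_adj: "i \<le> 2 * a + 1 \<Longrightarrow> j \<le> 2 * a + 1 \<Longrightarrow> A1 (0, i) (0, j) \<longleftrightarrow> (j = Suc i \<or> i = Suc j)"
  using ab by (auto simp: madj_def marc_def Wv_def)


lemma A1_rho:
  assumes "u \<in> Kv" "v \<in> Kv" "A1 u v" "fst u = 0" "fst v = 0"
  shows "A1 (rho u) (rho v)"
proof -
  obtain i j where u: "u = (0, i)" and v: "v = (0, j)" using assms by (cases u, cases v) auto
  have ij: "i \<le> 2 * a + 1" "j \<le> 2 * a + 1" using K_path assms u v by auto
  then have "j = Suc i \<or> i = Suc j" using path_adj assms u v by auto
  then show ?thesis using ij path_adj u v by (auto simp: rho_def)
qed

lemma bd_R:
  assumes "u \<in> Kv" "v \<in> Kv" "A1 u v" "inR u" "\<not> inR v"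
  shows "u = (0, Suc a) \<and> v = (0, a)"
proof -
  obtain i where u: "u = (0, i)" "a < i" "i \<le> 2 * a + 1" using assms K_path by (cases u) (auto simp: inR_def)
  show ?thesis
  proof (cases "fst v = 0")
    case True
    then obtain j where v: "v = (0, j)" "j \<le> a" using assms(2,5) K_path by (cases v) (auto simp: inR_def)
    then show ?thesis using path_adj u assms(3) by auto
  next
    case False
    then show ?thesis using assms(3) u by (auto simp: madj_def marc_def)
  qed
qed

lemma bd_R2:
  assumes "u \<in> Kv" "v \<in> Kv" "A1 u v" "inR2 u" "\<not> inR2 v" "inR v"
  shows "u = (0, Suc (Suc a)) \<and> v = (0, Suc a)"
proof -
  obtain i where u: "u = (0, i)" "Suc a < i" "i \<le> 2 * a + 1" using assms K_path by (cases u) (auto simp: inR2_def)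
  obtain j where v: "v = (0, j)" "j = Suc a" using assms(2,5,6) K_path by (cases v) (auto simp: inR_def inR2_def)
  show ?thesis using path_adj u v assms(3) by auto
qed

lemma adj_a: "A1 (0, a) (0, Suc a)" "A1 (0, a) (0, a - 1)"
  using path_adj[of a "Suc a"] path_adj[of a "a - 1"] a1 by auto

lemma lwalk_rho: "lwalk A1 r \<Longrightarrow> set r \<subseteq> Kv \<Longrightarrow> \<forall>u\<in>set r. fst u = 0 \<Longrightarrow> lwalk A1 (map rho r)"
  by (erule lwalk_map) (use A1_rho in blast)

end

context model
begin

definition phiM :: "(nat \<times> nat) list \<Rightarrow> (nat \<times> nat) list" where
  "phiM r = (if \<forall>u\<in>set r. inR u then map rho r else
     (let P1 = takeWhile inR r; rest = dropWhile inR r;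
          P2 = twR inR rest; Mid = dwR inR rest;
          P2b = twR inR2 P2; P2a = dwR inR2 P2
      in map rho P1 @ P2a @ Mid @ map rho P2b))"

definition psiM :: "(nat \<times> nat) list \<Rightarrow> (nat \<times> nat) list" where
  "psiM z = (if \<forall>u\<in>set z. inL u then map rho z else
     (let A = takeWhile inL z; rest = dropWhile inL z;
          B2a = takeWhile inR rest; rest2 = dropWhile inR rest;
          B = twR inL2 rest2; Mz = dwR inL2 rest2
      in map rho A @ Mz @ B2a @ map rho B))"

abbreviation "x0 \<equiv> (0::nat, 2 * a + 1)"

lemma x0K: "x0 \<in> Kv" by (simp add: Kv_def)

lemma lw_parts:
  assumes "lwalk R (xs @ ys)" "xs \<noteq> []" "ys \<noteq> []"
  shows "lwalk R xs" "lwalk R ys" "R (last xs) (hd ys)"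
  using assms lwalk_append by metis+

lemma hl_sub: "xs \<noteq> [] \<Longrightarrow> set xs \<subseteq> S \<Longrightarrow> hd xs \<in> S"
  "xs \<noteq> [] \<Longrightarrow> set xs \<subseteq> S \<Longrightarrow> last xs \<in> S"
  by auto

lemma hl_P: "xs \<noteq> [] \<Longrightarrow> \<forall>u\<in>set xs. P u \<Longrightarrow> P (hd xs)"
  "xs \<noteq> [] \<Longrightarrow> \<forall>u\<in>set xs. P u \<Longrightarrow> P (last xs)"
  by auto

lemma phi_decomp:
  assumes r: "r \<in> Dw Kv A1 x0" and nR: "\<not> (\<forall>u\<in>set r. inR u)"
  shows "\<exists>P1 Mid P2a P2b. r = P1 @ Mid @ P2a @ P2b \<and> phiM r = map rho P1 @ P2a @ Mid @ map rho P2b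
    \<and> P1 \<noteq> [] \<and> (\<forall>u\<in>set P1. inR u) \<and> lwalk A1 P1 \<and> hd P1 = x0 \<and> last P1 = (0, Suc a)
    \<and> Mid \<noteq> [] \<and> lwalk A1 Mid \<and> hd Mid = (0, a) \<and> last Mid = (0, a)
    \<and> P2a \<noteq> [] \<and> (\<forall>u\<in>set P2a. inR u) \<and> lwalk A1 P2a \<and> hd P2a = (0, Suc a) \<and> last P2a = (0, Suc a)
    \<and> P2b \<noteq> [] \<and> (\<forall>u\<in>set P2b. inR2 u) \<and> lwalk A1 P2b \<and> hd P2b = (0, Suc (Suc a)) \<and> last P2b = x0
    \<and> set r \<subseteq> Kv"
proof -
  have rp: "r \<noteq> []" "set r \<subseteq> Kv" "lwalk A1 r" "hd r = x0" "last r = x0" using r by (auto simp: Dw_def)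
  define P1 where "P1 = takeWhile inR r"
  define rest where "rest = dropWhile inR r"
  define P2 where "P2 = twR inR rest"
  define Mid where "Mid = dwR inR rest"
  define P2b where "P2b = twR inR2 P2"
  define P2a where "P2a = dwR inR2 P2"
  have phi: "phiM r = map rho P1 @ P2a @ Mid @ map rho P2b"
    using nR unfolding phiM_def Let_def P1_def rest_def P2_def Mid_def P2b_def P2a_def
    by (simp only: if_False)
  have x0R: "inR x0" "inR2 x0" using a1 by (auto simp: inR_def inR2_def)
  have r1: "r = P1 @ rest" by (simp add: P1_def rest_def)
  have P1ne: "P1 \<noteq> []" using rp x0R by (cases r) (auto simp: P1_def)
  have P1R: "\<forall>u\<in>set P1. inR u" by (auto simp: P1_def dest: set_takeWhileD)
  have restne: "rest \<noteq> []" using nR by (auto simp: rest_def dropWhile_eq_Nil_conv)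
  have hrest: "\<not> inR (hd rest)" using restne by (simp add: rest_def hd_dropWhile)
  have w1: "lwalk A1 P1" "lwalk A1 rest" "A1 (last P1) (hd rest)" using lw_parts rp(3) r1 P1ne restne by metis+
  have sP1: "set P1 \<subseteq> Kv" "set rest \<subseteq> Kv" using rp(2) r1 by auto
  have lP1: "last P1 = (0, Suc a)" and hr: "hd rest = (0, a)"
    using bd_R[of "last P1" "hd rest"] sP1 P1ne restne w1(3) P1R hrest hl_sub hl_P by metis+
  have hP1: "hd P1 = x0" using rp r1 P1ne by simp
  have lrest: "last rest = x0" using rp r1 restne by simp
  have r2: "rest = Mid @ P2" using dwR_twR by (metis Mid_def P2_def)
  have P2R: "\<forall>u\<in>set P2. inR u" using twR_P P2_def by metis
  have Midne: "Mid \<noteq> []"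
  proof
    assume "Mid = []"
    then have "rest = P2" using r2 by simp
    then show False using hrest P2R restne by simp
  qed
  have P2ne: "P2 \<noteq> []"
  proof
    assume "P2 = []"
    then have "last Mid = x0" using r2 lrest by simp
    then show False using dwR_last[of inR rest] Midne Mid_def x0R by simp
  qed
  have lMid: "\<not> inR (last Mid)" using dwR_last Midne Mid_def by metis
  have w2: "lwalk A1 Mid" "lwalk A1 P2" "A1 (last Mid) (hd P2)" using lw_parts w1(2) r2 Midne P2ne by metis+
  have sMid: "set Mid \<subseteq> Kv" "set P2 \<subseteq> Kv" using sP1 r2 by auto
  have "last Mid = (0, a) \<and> hd P2 = (0, Suc a)"
    using bd_R[of "hd P2" "last Mid"] A1_sym[OF w2(3)] sMid Midne P2ne P2R lMid hl_sub hl_P by metis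
  then have lM: "last Mid = (0, a)" and hP2: "hd P2 = (0, Suc a)" by auto
  have hM: "hd Mid = (0, a)" using hr r2 Midne by simp
  have lP2: "last P2 = x0" using lrest r2 P2ne by simp
  have r3: "P2 = P2a @ P2b" using dwR_twR by (metis P2a_def P2b_def)
  have P2bR: "\<forall>u\<in>set P2b. inR2 u" using twR_P P2b_def by metis
  have P2ane: "P2a \<noteq> []"
  proof
    assume "P2a = []"
    then have "P2 = P2b" using r3 by simp
    then show False using P2bR hP2 P2ne by (cases P2) (auto simp: inR2_def)
  qed
  have P2bne: "P2b \<noteq> []"
  proof
    assume "P2b = []"
    then have "last P2a = x0" using r3 lP2 by simp
    then show False using dwR_last[of inR2 P2] P2ane P2a_def x0R by simp
  qed
  have lP2a: "\<not> inR2 (last P2a)" using dwR_last P2ane P2a_def by metis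
  have P2aR: "\<forall>u\<in>set P2a. inR u" using P2R r3 by simp
  have w3: "lwalk A1 P2a" "lwalk A1 P2b" "A1 (last P2a) (hd P2b)" using lw_parts w2(2) r3 P2ane P2bne by metis+
  have sP2: "set P2a \<subseteq> Kv" "set P2b \<subseteq> Kv" using sMid r3 by auto
  have "hd P2b = (0, Suc (Suc a)) \<and> last P2a = (0, Suc a)"
    using bd_R2[of "hd P2b" "last P2a"] A1_sym[OF w3(3)] sP2 P2ane P2bne P2bR lP2a P2aR hl_sub hl_P by metis
  moreover have "hd P2a = (0, Suc a)" using hP2 r3 P2ane by simp
  moreover have "last P2b = x0" using lP2 r3 P2bne by simp
  moreover have "r = P1 @ Mid @ P2a @ P2b" using r1 r2 r3 by simp
  ultimately show ?thesis
    using phi P1ne P1R w1 hP1 lP1 Midne w2 hM lM P2ane P2aR w3 P2bne P2bR rp(2)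
    by blast
qed

end

context model
begin

lemma phiK: "set r \<subseteq> Kv \<Longrightarrow> set (phiM r) \<subseteq> Kv \<and> length (phiM r) = length r"
proof (cases "\<forall>u\<in>set r. inR u")
  case True
  assume "set r \<subseteq> Kv"
  then show ?thesis using True rhoK by (auto simp: phiM_def)
next
  case False
  assume rK: "set r \<subseteq> Kv"
  define P1 where "P1 = takeWhile inR r"
  define rest where "rest = dropWhile inR r"
  define P2 where "P2 = twR inR rest"
  define Mid where "Mid = dwR inR rest"
  define P2b where "P2b = twR inR2 P2"
  define P2a where "P2a = dwR inR2 P2"
  have phi: "phiM r = map rho P1 @ P2a @ Mid @ map rho P2b"
    using False unfolding phiM_def Let_def P1_def rest_def P2_def Mid_def P2b_def P2a_def
    by (simp only: if_False)
  have e1: "r = P1 @ rest" by (simp add: P1_def rest_def)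
  have e2: "rest = Mid @ P2" using dwR_twR by (metis Mid_def P2_def)
  have e3: "P2 = P2a @ P2b" using dwR_twR by (metis P2a_def P2b_def)
  have "set P1 \<subseteq> Kv" "set Mid \<subseteq> Kv" "set P2a \<subseteq> Kv" "set P2b \<subseteq> Kv" using rK e1 e2 e3 by auto
  then have "set (phiM r) \<subseteq> Kv" using phi rhoK by auto
  moreover have "length (phiM r) = length r" using phi e1 e2 e3 by simp
  ultimately show ?thesis by simp
qed

lemma rho_sa: "rho (0, Suc a) = (0, a)" "rho (0, Suc (Suc a)) = (0, a - 1)" "rho x0 = (0, 0)"
  using a1 by (auto simp: rho_def)

lemma fstR: "\<forall>u\<in>set xs. inR u \<Longrightarrow> \<forall>u\<in>set xs. fst u = 0" by (auto simp: inR_def)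
lemma fstR2: "\<forall>u\<in>set xs. inR2 u \<Longrightarrow> \<forall>u\<in>set xs. fst u = 0" by (auto simp: inR2_def)

lemma phiD: assumes r: "r \<in> Dw Kv A1 x0" shows "phiM r \<in> Dw Kv A1 (0, 0)"
proof (cases "\<forall>u\<in>set r. inR u")
  case True
  have rp: "r \<noteq> []" "set r \<subseteq> Kv" "lwalk A1 r" "hd r = x0" "last r = x0" using r by (auto simp: Dw_def)
  have "lwalk A1 (map rho r)" using lwalk_rho rp fstR[OF True] by simp
  then show ?thesis using True rp rhoK rho_sa by (auto simp: phiM_def Dw_def hd_map last_map)
next
  case False
  then obtain P1 Mid P2a P2b where d: "r = P1 @ Mid @ P2a @ P2b" "phiM r = map rho P1 @ P2a @ Mid @ map rho P2b"
    "P1 \<noteq> []" "\<forall>u\<in>set P1. inR u" "lwalk A1 P1" "hd P1 = x0" "last P1 = (0, Suc a)"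
    "Mid \<noteq> []" "lwalk A1 Mid" "hd Mid = (0, a)" "last Mid = (0, a)"
    "P2a \<noteq> []" "\<forall>u\<in>set P2a. inR u" "lwalk A1 P2a" "hd P2a = (0, Suc a)" "last P2a = (0, Suc a)"
    "P2b \<noteq> []" "\<forall>u\<in>set P2b. inR2 u" "lwalk A1 P2b" "hd P2b = (0, Suc (Suc a))" "last P2b = x0"
    "set r \<subseteq> Kv"
    using phi_decomp[OF r] by blast
  have sK: "set P1 \<subseteq> Kv" "set Mid \<subseteq> Kv" "set P2a \<subseteq> Kv" "set P2b \<subseteq> Kv" using d(1,22) by auto
  have m1: "lwalk A1 (map rho P1)" using lwalk_rho d(5) sK(1) fstR[OF d(4)] by simp
  have m2: "lwalk A1 (map rho P2b)" using lwalk_rho d(19) sK(4) fstR2[OF d(18)] by simp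
  have j1: "A1 (last (map rho P1)) (hd P2a)" using d(3,7,15) rho_sa adj_a by (simp add: last_map)
  have j2: "A1 (last P2a) (hd Mid)" using d(16,10) adj_a A1_sym by simp
  have j3: "A1 (last Mid) (hd (map rho P2b))" using d(11,17,20) adj_a rho_sa by (simp add: hd_map)
  have "lwalk A1 (Mid @ map rho P2b)" using d(9,8,17) m2 j3 by (simp add: lwalk_append)
  then have "lwalk A1 (P2a @ Mid @ map rho P2b)" using d(14,12,8,10) j2 by (simp add: lwalk_append)
  then have "lwalk A1 (map rho P1 @ P2a @ Mid @ map rho P2b)" using m1 d(3,12) j1 by (simp add: lwalk_append)
  moreover have "set (phiM r) \<subseteq> Kv" using d(2) sK rhoK by auto
  moreover have "hd (phiM r) = (0, 0)" using d(2,3,6) rho_sa by (simp add: hd_map)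
  moreover have "last (phiM r) = (0, 0)" using d(2,17,21) rho_sa by (simp add: last_map)
  ultimately show ?thesis using d(2,3) by (simp add: Dw_def)
qed

lemma psiphi: assumes r: "r \<in> Dw Kv A1 x0" shows "psiM (phiM r) = r"
proof (cases "\<forall>u\<in>set r. inR u")
  case True
  have rp: "set r \<subseteq> Kv" using r by (auto simp: Dw_def)
  have "\<forall>u\<in>set (map rho r). inL u" using True rp rho_R by auto
  moreover have "map rho (map rho r) = r" using rp rho_rho by (induction r) auto
  ultimately show ?thesis using True by (simp add: phiM_def psiM_def)
next
  case False
  then obtain P1 Mid P2a P2b where d: "r = P1 @ Mid @ P2a @ P2b" "phiM r = map rho P1 @ P2a @ Mid @ map rho P2b"
    "P1 \<noteq> []" "\<forall>u\<in>set P1. inR u" "lwalk A1 P1" "hd P1 = x0" "last P1 = (0, Suc a)"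
    "Mid \<noteq> []" "lwalk A1 Mid" "hd Mid = (0, a)" "last Mid = (0, a)"
    "P2a \<noteq> []" "\<forall>u\<in>set P2a. inR u" "lwalk A1 P2a" "hd P2a = (0, Suc a)" "last P2a = (0, Suc a)"
    "P2b \<noteq> []" "\<forall>u\<in>set P2b. inR2 u" "lwalk A1 P2b" "hd P2b = (0, Suc (Suc a))" "last P2b = x0"
    "set r \<subseteq> Kv"
    using phi_decomp[OF r] by blast
  have sK: "set P1 \<subseteq> Kv" "set Mid \<subseteq> Kv" "set P2a \<subseteq> Kv" "set P2b \<subseteq> Kv" using d(1,22) by auto
  let ?z = "map rho P1 @ P2a @ Mid @ map rho P2b"
  have L1: "\<forall>u\<in>set (map rho P1). inL u" using d(4) sK(1) rho_R by auto
  have nL: "\<not> inL (hd P2a)" using d(15) by (simp add: inL_def)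
  have nall: "\<not> (\<forall>u\<in>set ?z. inL u)" using nL d(12) by auto
  have t1: "takeWhile inL ?z = map rho P1" "dropWhile inL ?z = P2a @ Mid @ map rho P2b"
    using tw_split[OF L1, of "P2a @ Mid @ map rho P2b"] d(12) nL by auto
  have nR: "\<not> inR (hd (Mid @ map rho P2b))" using d(8,10) by (simp add: inR_def)
  have t2: "takeWhile inR (P2a @ Mid @ map rho P2b) = P2a" "dropWhile inR (P2a @ Mid @ map rho P2b) = Mid @ map rho P2b"
    using tw_split[OF d(13), of "Mid @ map rho P2b"] d(8) nR by auto
  have L2: "\<forall>u\<in>set (map rho P2b). inL2 u" using d(18) sK(4) rho_R2 by auto
  have nL2: "\<not> inL2 (last Mid)" using d(11) by (simp add: inL2_def)
  have t3: "twR inL2 (Mid @ map rho P2b) = map rho P2b" "dwR inL2 (Mid @ map rho P2b) = Mid"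
    using twR_stop[OF d(8) nL2 L2] dwR_stop[OF d(8) nL2 L2] by auto
  have "psiM ?z = map rho (map rho P1) @ Mid @ P2a @ map rho (map rho P2b)"
    using nall t1 t2 t3 unfolding psiM_def Let_def by (simp only: if_False)
  also have "\<dots> = P1 @ Mid @ P2a @ P2b"
  proof -
    have "map rho (map rho xs) = xs" if "set xs \<subseteq> Kv" for xs using that rho_rho by (induction xs) auto
    then show ?thesis using sK by simp
  qed
  finally show ?thesis using d(1,2) by simp
qed

lemma phi_inv: assumes r: "r \<in> Dw Kv A1 x0"
  shows "(\<forall>u\<in>set (phiM r). inL u) \<or> (0, Suc a) \<in> set (phiM r)"
proof (cases "\<forall>u\<in>set r. inR u")
  case True
  have rp: "set r \<subseteq> Kv" using r by (auto simp: Dw_def)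
  then show ?thesis using True rho_R by (auto simp: phiM_def)
next
  case False
  then obtain P1 Mid P2a P2b where d: "phiM r = map rho P1 @ P2a @ Mid @ map rho P2b"
    "P2a \<noteq> []" "hd P2a = (0, Suc a)"
    using phi_decomp[OF r] by blast
  then have "(0, Suc a) \<in> set P2a" using hd_in_set by force
  then show ?thesis using d(1) by auto
qed

end

context model
begin

lemma tT: "(0, 2 * a + 2) \<in> Tv" using ab by (simp add: Tv_def)
lemma yK: "(0, 0) \<in> Kv" by (simp add: Kv_def)

lemma is_bridge: "bridge Wv Kv Tv (madj (2 * a + 1)) (madj 0) x0 (0, 0) (0, 2 * a + 2) phiM psiM"
proof (unfold_locales)
  show "finite Wv" by (rule finW)
  show "Wv = Kv \<union> Tv" by (rule WKT)
  show "Kv \<inter> Tv = {}" by (rule KT)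
  show "x0 \<in> Kv" by (rule x0K)
  show "(0, 0) \<in> Kv" by (rule yK)
  show "(0, 2 * a + 2) \<in> Tv" by (rule tT)
  show "\<And>u v. A1 u v \<Longrightarrow> u \<in> Wv \<and> v \<in> Wv" by (simp add: madj_def)
  show "\<And>u v. madj 0 u v \<Longrightarrow> u \<in> Wv \<and> v \<in> Wv" by (simp add: madj_def)
  show "\<And>u v. A1 u v \<Longrightarrow> A1 v u" by (auto simp: madj_def)
  show "\<And>u v. madj 0 u v \<Longrightarrow> madj 0 v u" by (auto simp: madj_def)
  show "\<And>u v. u \<in> Kv \<Longrightarrow> v \<in> Kv \<Longrightarrow> A1 u v = madj 0 u v" by (rule agreeK)
  show "\<And>u v. u \<in> Tv \<Longrightarrow> v \<in> Tv \<Longrightarrow> A1 u v = madj 0 u v" by (rule agreeT) auto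
  show "\<And>u v. u \<in> Kv \<Longrightarrow> v \<in> Tv \<Longrightarrow> A1 u v = (u = x0 \<and> v = (0, 2 * a + 2))" by (rule cross) auto
  show "\<And>u v. u \<in> Kv \<Longrightarrow> v \<in> Tv \<Longrightarrow> madj 0 u v = (u = (0, 0) \<and> v = (0, 2 * a + 2))" by (rule cross) auto
  show "\<And>r. set r \<subseteq> Kv \<Longrightarrow> set (phiM r) \<subseteq> Kv \<and> length (phiM r) = length r" by (rule phiK)
  show "\<And>r. r \<in> Dw Kv A1 x0 \<Longrightarrow> phiM r \<in> Dw Kv A1 (0, 0)" by (rule phiD)
  show "\<And>r. r \<in> Dw Kv A1 x0 \<Longrightarrow> psiM (phiM r) = r" by (rule psiphi)
qed

definition "sw = map (\<lambda>i. (0::nat, i)) [0..<Suc a] @ [(Suc 0, 1)] @ rev (map (\<lambda>i. (0, i)) [0..<Suc a])"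

lemma path_lwalk: "n \<le> 2 * a + 1 \<Longrightarrow> lwalk A1 (map (\<lambda>i. (0::nat, i)) [0..<Suc n])"
proof (induction n)
  case 0 then show ?case by simp
next
  case (Suc n)
  have "[0..<Suc (Suc n)] = [0..<Suc n] @ [Suc n]" by simp
  then show ?case using Suc path_adj[of n "Suc n"] by (simp add: lwalk_append last_map del: upt_Suc)
qed

lemma sw_D: "sw \<in> Dw Kv A1 (0, 0)"
proof -
  let ?p = "map (\<lambda>i. (0::nat, i)) [0..<Suc a]"
  have l0: "0 < length qs" using qne by simp
  then have "1 \<le> qs ! 0" using qpos nth_mem by blast
  then have q: "(Suc 0, 1) \<in> Qv" using l0 unfolding Qv_def by blast
  then have qK: "(Suc 0, 1) \<in> Kv" "(Suc 0, 1) \<in> Wv" by (auto simp: Kv_def Wv_def)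
  have pK: "set ?p \<subseteq> Kv" by (auto simp: Kv_def)
  have aW: "(0, a) \<in> Wv" by (simp add: Wv_def)
  have adj: "A1 (0, a) (Suc 0, 1)" "A1 (Suc 0, 1) (0, a)" using qK aW by (auto simp: madj_def marc_def)
  have lp: "lwalk A1 ?p" using path_lwalk[of a] by simp
  have lr: "lwalk A1 (rev ?p)" by (rule lwalk_rev[OF _ lp]) (auto simp: madj_def)
  have "last ?p = (0, a)" by (simp add: last_map)
  moreover have "hd (rev ?p) = (0, a)" by (simp add: hd_rev last_map)
  ultimately have "lwalk A1 sw" using lp lr adj by (simp add: sw_def lwalk_append lwalk_Cons)
  moreover have "set sw \<subseteq> Kv" using pK qK by (auto simp: sw_def)
  moreover have "hd sw = (0, 0)" by (simp add: sw_def hd_map upt_conv_Cons del: upt_Suc)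
  moreover have "last sw = (0, 0)" by (simp add: sw_def last_rev hd_map upt_conv_Cons del: upt_Suc)
  ultimately show ?thesis by (simp add: Dw_def sw_def)
qed

lemma sw_notin: "sw \<notin> phiM ` Dw Kv A1 x0"
proof
  assume "sw \<in> phiM ` Dw Kv A1 x0"
  then obtain r where r: "r \<in> Dw Kv A1 x0" "sw = phiM r" by auto
  have "(Suc 0, 1) \<in> set sw" by (simp add: sw_def)
  moreover have "\<not> inL (Suc 0, 1)" by (simp add: inL_def)
  moreover have "(0, Suc a) \<notin> set sw" by (auto simp: sw_def)
  ultimately show False using phi_inv[OF r(1)] r(2) by auto
qed

theorem model_prec:
  "(\<forall>L. M Wv (madj (2 * a + 1)) L \<le> M Wv (madj 0) L) \<and>
   (\<exists>L. M Wv (madj (2 * a + 1)) L < M Wv (madj 0) L)"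
  using bridge.M_le[OF is_bridge] bridge.M_less[OF is_bridge sw_D sw_notin] by blast

end

lemma M_iso:
  assumes bij: "bij_betw f V V'"
    and adj: "\<And>u v. u \<in> V \<Longrightarrow> v \<in> V \<Longrightarrow> adj' (f u) (f v) = adj u v"
  shows "M V adj k = M V' adj' k"
proof -
  define g where "g = the_inv_into V f"
  have inj: "inj_on f V" and im: "f ` V = V'" using bij by (auto simp: bij_betw_def)
  have gf: "\<And>u. u \<in> V \<Longrightarrow> g (f u) = u" using the_inv_into_f_f[OF inj] g_def by simp
  have fg: "\<And>v. v \<in> V' \<Longrightarrow> f (g v) = v" using f_the_inv_into_f[OF inj] im g_def by auto
  have gV: "\<And>v. v \<in> V' \<Longrightarrow> g v \<in> V" using the_inv_into_into[OF inj] im g_def by auto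
  have "bij_betw (map f) (closed_walks V adj k) (closed_walks V' adj' k)"
  proof (rule bij_betw_byWitness[where f' = "map g"])
    show "\<forall>xs\<in>closed_walks V adj k. map g (map f xs) = xs"
      using gf by (auto simp: closed_walks_def map_idI subset_iff)
    show "\<forall>ys\<in>closed_walks V' adj' k. map f (map g ys) = ys"
      using fg by (auto simp: closed_walks_def map_idI subset_iff)
    show "map f ` closed_walks V adj k \<subseteq> closed_walks V' adj' k"
    proof
      fix ys assume "ys \<in> map f ` closed_walks V adj k"
      then obtain xs where xs: "xs \<in> closed_walks V adj k" "ys = map f xs" by auto
      then have c: "length xs = Suc k" "set xs \<subseteq> V" "\<forall>i<k. adj (xs ! i) (xs ! Suc i)" "hd xs = last xs"
        by (auto simp: closed_walks_def)
      have "\<forall>i<k. adj' (ys ! i) (ys ! Suc i)" using c adj xs(2) by (auto simp: subset_iff)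
      moreover have "set ys \<subseteq> V'" using c(2) xs(2) im by auto
      moreover have "hd ys = last ys" using c xs(2)
        by (metis hd_map last_map list.size(3) nat.distinct(1))
      ultimately show "ys \<in> closed_walks V' adj' k" using c xs(2) by (simp add: closed_walks_def)
    qed
    show "map g ` closed_walks V' adj' k \<subseteq> closed_walks V adj k"
    proof
      fix xs assume "xs \<in> map g ` closed_walks V' adj' k"
      then obtain ys where ys: "ys \<in> closed_walks V' adj' k" "xs = map g ys" by auto
      then have c: "length ys = Suc k" "set ys \<subseteq> V'" "\<forall>i<k. adj' (ys ! i) (ys ! Suc i)" "hd ys = last ys"
        by (auto simp: closed_walks_def)
      have "\<forall>i<k. adj (xs ! i) (xs ! Suc i)"
      proof (intro allI impI)
        fix i assume i: "i < k"
        have "ys ! i \<in> V'" "ys ! Suc i \<in> V'" using c i by (auto simp: subset_iff)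
        then show "adj (xs ! i) (xs ! Suc i)"
          using adj[of "g (ys ! i)" "g (ys ! Suc i)"] gV fg c(3) i ys(2) c(1) by auto
      qed
      moreover have "set xs \<subseteq> V" using c(2) ys(2) gV by auto
      moreover have "hd xs = last xs" using c ys(2)
        by (metis hd_map last_map list.size(3) nat.distinct(1))
      ultimately show "xs \<in> closed_walks V adj k" using c ys(2) by (simp add: closed_walks_def)
    qed
  qed
  then show ?thesis by (simp add: M_def bij_betw_same_card)
qed

locale star =
  fixes as :: "nat list" and k :: nat
  assumes len: "length as = k" and k3: "3 \<le> k" and pos: "\<forall>z\<in>set as. 1 \<le> z"
    and gap: "as ! (k - 2) + 2 \<le> as ! (k - 1)"
begin

definition "aa = as ! (k - 2)"
definition "bb = as ! (k - 1)"
definition "qq = take (k - 2) as"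

lemma qq_len: "length qq = k - 2" using len by (simp add: qq_def)
lemma qq_nth: "i < k - 2 \<Longrightarrow> qq ! i = as ! i" by (simp add: qq_def)

lemma aa1: "1 \<le> aa" using pos len k3 by (simp add: aa_def)
lemma gap': "aa + 2 \<le> bb" using gap by (simp add: aa_def bb_def)

sublocale model qq aa bb
proof
  show "1 \<le> aa" by (rule aa1)
  show "aa + 2 \<le> bb" by (rule gap')
  show "qq \<noteq> []" using qq_len k3 by auto
  show "\<forall>z\<in>set qq. 1 \<le> z" using pos unfolding qq_def by (auto dest: in_set_takeD)
qed

lemma Qv_iff: "(Suc i, j) \<in> Qv \<longleftrightarrow> i < k - 2 \<and> 1 \<le> j \<and> j \<le> as ! i"
  using qq_len qq_nth by (auto simp: Qv_def)

lemma Qv_fst: "u \<in> Qv \<Longrightarrow> 0 < fst u \<and> fst u < k - 1"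
  using qq_len by (auto simp: Qv_def)

lemma verts_gen:
  assumes cl: "length cs = k" and cq: "\<And>i. i < k - 2 \<Longrightarrow> cs ! i = as ! i"
  shows "u \<in> starlike_verts cs \<longleftrightarrow> u = (0, 0) \<or> u \<in> Qv
   \<or> (\<exists>j. u = (k - 1, j) \<and> 1 \<le> j \<and> j \<le> cs ! (k - 2)) \<or> (\<exists>j. u = (k, j) \<and> 1 \<le> j \<and> j \<le> cs ! (k - 1))"
proof
  assume "u \<in> starlike_verts cs"
  then consider "u = (0, 0)" | i j where "u = (Suc i, j)" "i < k" "1 \<le> j" "j \<le> cs ! i"
    using cl by (auto simp: starlike_verts_def)
  then show "u = (0, 0) \<or> u \<in> Qv \<or> (\<exists>j. u = (k - 1, j) \<and> 1 \<le> j \<and> j \<le> cs ! (k - 2)) \<or> (\<exists>j. u = (k, j) \<and> 1 \<le> j \<and> j \<le> cs ! (k - 1))"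
  proof cases
    case 1 then show ?thesis by simp
  next
    case (2 i j)
    have "i < k - 2 \<or> i = k - 2 \<or> i = k - 1" using 2 by linarith
    moreover have "Suc (k - 2) = k - 1" "Suc (k - 1) = k" using k3 by auto
    ultimately show ?thesis using 2 Qv_iff[of i j] cq[of i] by auto
  qed
next
  assume "u = (0, 0) \<or> u \<in> Qv \<or> (\<exists>j. u = (k - 1, j) \<and> 1 \<le> j \<and> j \<le> cs ! (k - 2)) \<or> (\<exists>j. u = (k, j) \<and> 1 \<le> j \<and> j \<le> cs ! (k - 1))"
  then consider "u = (0, 0)" | "u \<in> Qv" | j where "u = (k - 1, j)" "1 \<le> j" "j \<le> cs ! (k - 2)"
    | j where "u = (k, j)" "1 \<le> j" "j \<le> cs ! (k - 1)" by blast
  then show "u \<in> starlike_verts cs"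
  proof cases
    case 1 then show ?thesis by (simp add: starlike_verts_def)
  next
    case 2
    then obtain i j where "u = (Suc i, j)" "i < k - 2" "1 \<le> j" "j \<le> as ! i"
      using Qv_fst Qv_iff by (cases u) (metis gr0_implies_Suc fst_conv)
    then show ?thesis using cl cq by (auto simp: starlike_verts_def)
  next
    case (3 j)
    have "k - 1 = Suc (k - 2)" using k3 by simp
    then show ?thesis using 3 cl k3 by (auto simp: starlike_verts_def)
  next
    case (4 j)
    have "k = Suc (k - 1)" "k - 1 < k" using k3 by auto
    then show ?thesis using 4 cl k3 unfolding starlike_verts_def by blast
  qed
qed

definition "as2 = as[k - 2 := aa + 1, k - 1 := bb - 1]"

lemma as2: "length as2 = k" "\<And>i. i < k - 2 \<Longrightarrow> as2 ! i = as ! i" "as2 ! (k - 2) = aa + 1" "as2 ! (k - 1) = bb - 1"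
  using len k3 by (auto simp: as2_def nth_list_update)

lemma verts_G: "u \<in> starlike_verts as \<longleftrightarrow> u = (0, 0) \<or> u \<in> Qv
   \<or> (\<exists>j. u = (k - 1, j) \<and> 1 \<le> j \<and> j \<le> aa) \<or> (\<exists>j. u = (k, j) \<and> 1 \<le> j \<and> j \<le> bb)"
  using verts_gen[of as u] len by (simp add: aa_def bb_def)

lemma verts_H: "u \<in> starlike_verts as2 \<longleftrightarrow> u = (0, 0) \<or> u \<in> Qv
   \<or> (\<exists>j. u = (k - 1, j) \<and> 1 \<le> j \<and> j \<le> aa + 1) \<or> (\<exists>j. u = (k, j) \<and> 1 \<le> j \<and> j \<le> bb - 1)"
  using verts_gen[of as2 u] as2 by simp

definition fG :: "nat \<times> nat \<Rightarrow> nat \<times> nat" where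
  "fG u = (if fst u = 0 then (0, aa) else if fst u = k - 1 then (0, aa - snd u)
           else if fst u = k then (0, aa + snd u) else u)"

lemma k1: "k - 1 \<noteq> 0" "k \<noteq> 0" "k - 1 \<noteq> k" "k \<noteq> k - 1" "Suc (k - 1) = k" using k3 by auto

abbreviation "SA u v \<equiv> starlike_arc u v \<or> starlike_arc v u"
abbreviation "MA e u v \<equiv> marc e u v \<or> marc e v u"

lemma fG_0: "fG (0, 0) = (0, aa)" by (simp add: fG_def)
lemma fG_A: "fG (k - 1, j) = (0, aa - j)" using k1 by (simp add: fG_def)
lemma fG_B: "fG (k, j) = (0, aa + j)" using k1 by (simp add: fG_def)
lemma fG_Q: assumes "u \<in> Qv" shows "fG u = u"
proof -
  have "0 < fst u" "fst u < k - 1" using Qv_fst[OF assms] by auto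
  then have "fst u \<noteq> 0" "fst u \<noteq> k - 1" "fst u \<noteq> k" by linarith+
  then show ?thesis by (simp add: fG_def)
qed

lemma gAA: "1 \<le> i \<Longrightarrow> i \<le> aa \<Longrightarrow> 1 \<le> j \<Longrightarrow> j \<le> aa \<Longrightarrow> SA (k-1, i) (k-1, j) \<longleftrightarrow> MA (2 * aa + 1) (0, aa - i) (0, aa - j)"
  using k1 by (auto simp: starlike_arc_def marc_def)
lemma gAB: "1 \<le> i \<Longrightarrow> i \<le> aa \<Longrightarrow> 1 \<le> j \<Longrightarrow> j \<le> bb \<Longrightarrow> SA (k-1, i) (k, j) \<longleftrightarrow> MA (2 * aa + 1) (0, aa - i) (0, aa + j)"
  using k1 by (auto simp: starlike_arc_def marc_def)
lemma gBB: "1 \<le> i \<Longrightarrow> i \<le> bb \<Longrightarrow> 1 \<le> j \<Longrightarrow> j \<le> bb \<Longrightarrow> SA (k, i) (k, j) \<longleftrightarrow> MA (2 * aa + 1) (0, aa + i) (0, aa + j)"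
  using k1 by (auto simp: starlike_arc_def marc_def)
lemma g0A: "1 \<le> j \<Longrightarrow> j \<le> aa \<Longrightarrow> SA (0, 0) (k-1, j) \<longleftrightarrow> MA (2 * aa + 1) (0, aa) (0, aa - j)"
  using k1 by (auto simp: starlike_arc_def marc_def)
lemma g0B: "1 \<le> j \<Longrightarrow> j \<le> bb \<Longrightarrow> SA (0, 0) (k, j) \<longleftrightarrow> MA (2 * aa + 1) (0, aa) (0, aa + j)"
  using k1 by (auto simp: starlike_arc_def marc_def)
lemma g00: "SA (0, 0) (0, 0) \<longleftrightarrow> MA e (0, aa) (0, aa)"
  by (auto simp: starlike_arc_def marc_def)
lemma gQ0: assumes "u \<in> Qv" shows "SA u (0, 0) \<longleftrightarrow> MA e u (0, aa)"
proof -
  have "0 < fst u" using Qv_fst[OF assms(1)] by auto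
  then show ?thesis by (auto simp: starlike_arc_def marc_def)
qed
lemma gQP: assumes "u \<in> Qv" "c \<ge> k - 1" "i \<noteq> aa" shows "SA u (c, j) \<longleftrightarrow> MA e u (0, i)"
proof -
  have "0 < fst u" "fst u < k - 1" using Qv_fst[OF assms(1)] by auto
  then show ?thesis using assms(2,3) by (auto simp: starlike_arc_def marc_def)
qed
lemma gQQ: assumes "u \<in> Qv" "v \<in> Qv" shows "SA u v \<longleftrightarrow> MA e u v"
proof -
  have "0 < fst u" "0 < fst v" using Qv_fst assms by auto
  then show ?thesis by (auto simp: starlike_arc_def marc_def)
qed

lemma gBA: "1 \<le> i \<Longrightarrow> i \<le> aa \<Longrightarrow> 1 \<le> j \<Longrightarrow> j \<le> bb \<Longrightarrow> SA (k, j) (k-1, i) \<longleftrightarrow> MA (2 * aa + 1) (0, aa + j) (0, aa - i)"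
  using gAB by blast
lemma gA0: "1 \<le> j \<Longrightarrow> j \<le> aa \<Longrightarrow> SA (k-1, j) (0, 0) \<longleftrightarrow> MA (2 * aa + 1) (0, aa - j) (0, aa)"
  using g0A by blast
lemma gB0: "1 \<le> j \<Longrightarrow> j \<le> bb \<Longrightarrow> SA (k, j) (0, 0) \<longleftrightarrow> MA (2 * aa + 1) (0, aa + j) (0, aa)"
  using g0B by blast
lemma g0Q: "u \<in> Qv \<Longrightarrow> SA (0, 0) u \<longleftrightarrow> MA e (0, aa) u"
  using gQ0 by blast
lemma gPQ: "u \<in> Qv \<Longrightarrow> c \<ge> k - 1 \<Longrightarrow> i \<noteq> aa \<Longrightarrow> SA (c, j) u \<longleftrightarrow> MA e (0, i) u"
  using gQP by blast
lemma gQA: "u \<in> Qv \<Longrightarrow> 1 \<le> j \<Longrightarrow> j \<le> aa \<Longrightarrow> SA u (k - 1, j) \<longleftrightarrow> MA e u (0, aa - j)"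
  by (rule gQP) auto
lemma gQB: "u \<in> Qv \<Longrightarrow> 1 \<le> j \<Longrightarrow> SA u (k, j) \<longleftrightarrow> MA e u (0, aa + j)"
  by (rule gQP) auto
lemma gAQ: "u \<in> Qv \<Longrightarrow> 1 \<le> j \<Longrightarrow> j \<le> aa \<Longrightarrow> SA (k - 1, j) u \<longleftrightarrow> MA e (0, aa - j) u"
  by (rule gPQ) auto
lemma gBQ: "u \<in> Qv \<Longrightarrow> 1 \<le> j \<Longrightarrow> SA (k, j) u \<longleftrightarrow> MA e (0, aa + j) u"
  by (rule gPQ) auto

lemma arcG:
  assumes u: "u \<in> starlike_verts as" and v: "v \<in> starlike_verts as"
  shows "SA u v \<longleftrightarrow> MA (2 * aa + 1) (fG u) (fG v)"
proof -
  have U: "u = (0, 0) \<or> u \<in> Qv \<or> (\<exists>j. u = (k - 1, j) \<and> 1 \<le> j \<and> j \<le> aa) \<or> (\<exists>j. u = (k, j) \<and> 1 \<le> j \<and> j \<le> bb)"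
    using verts_G u by blast
  have V: "v = (0, 0) \<or> v \<in> Qv \<or> (\<exists>j. v = (k - 1, j) \<and> 1 \<le> j \<and> j \<le> aa) \<or> (\<exists>j. v = (k, j) \<and> 1 \<le> j \<and> j \<le> bb)"
    using verts_G v by blast
  show ?thesis
    using U V
    apply (elim disjE exE conjE)
    apply (simp_all only: fG_0 fG_A fG_B fG_Q gAA gAB gBB gBA g0A g0B gA0 gB0 g00 gQ0 g0Q gQQ gQA gQB gAQ gBQ)
    done
qed


definition fH :: "nat \<times> nat \<Rightarrow> nat \<times> nat" where
  "fH u = (if fst u = 0 then (0, aa) else if fst u = k - 1 then (0, aa + snd u)
           else if fst u = k then (if snd u \<le> aa then (0, aa - snd u) else (0, aa + 1 + snd u)) else u)"

end

context star begin


lemma fH_0: "fH (0, 0) = (0, aa)" by (simp add: fH_def)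
lemma fH_A: "fH (k - 1, j) = (0, aa + j)" using k1 by (simp add: fH_def)
lemma fH_B1: "j \<le> aa \<Longrightarrow> fH (k, j) = (0, aa - j)" using k1 by (simp add: fH_def)
lemma fH_B2: "aa + 1 \<le> j \<Longrightarrow> fH (k, j) = (0, aa + 1 + j)" using k1 by (simp add: fH_def)
lemma fH_Q: assumes "u \<in> Qv" shows "fH u = u"
proof -
  have "0 < fst u" "fst u < k - 1" using Qv_fst[OF assms] by auto
  then have "fst u \<noteq> 0" "fst u \<noteq> k - 1" "fst u \<noteq> k" by linarith+
  then show ?thesis by (simp add: fH_def)
qed

lemma fG_A': "fG (k - Suc 0, j) = (0, aa - j)" using fG_A by simp
lemma fH_A': "fH (k - Suc 0, j) = (0, aa + j)" using fH_A by simp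

lemma hAA: "1 \<le> i \<Longrightarrow> i \<le> aa + 1 \<Longrightarrow> 1 \<le> j \<Longrightarrow> j \<le> aa + 1 \<Longrightarrow> SA (k-1, i) (k-1, j) \<longleftrightarrow> MA 0 (0, aa + i) (0, aa + j)"
  using k1 aa1 by (auto simp: starlike_arc_def marc_def)
lemma hAB1: "1 \<le> i \<Longrightarrow> i \<le> aa + 1 \<Longrightarrow> 1 \<le> j \<Longrightarrow> j \<le> aa \<Longrightarrow> SA (k-1, i) (k, j) \<longleftrightarrow> MA 0 (0, aa + i) (0, aa - j)"
  using k1 aa1 by (auto simp: starlike_arc_def marc_def)
lemma hAB2: "1 \<le> i \<Longrightarrow> i \<le> aa + 1 \<Longrightarrow> aa + 1 \<le> j \<Longrightarrow> SA (k-1, i) (k, j) \<longleftrightarrow> MA 0 (0, aa + i) (0, aa + 1 + j)"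
  using k1 aa1 by (auto simp: starlike_arc_def marc_def)
lemma hB1B1: "1 \<le> i \<Longrightarrow> i \<le> aa \<Longrightarrow> 1 \<le> j \<Longrightarrow> j \<le> aa \<Longrightarrow> SA (k, i) (k, j) \<longleftrightarrow> MA 0 (0, aa - i) (0, aa - j)"
  using k1 aa1 by (auto simp: starlike_arc_def marc_def)
lemma hB1B2: "1 \<le> i \<Longrightarrow> i \<le> aa \<Longrightarrow> aa + 1 \<le> j \<Longrightarrow> SA (k, i) (k, j) \<longleftrightarrow> MA 0 (0, aa - i) (0, aa + 1 + j)"
  using k1 aa1 by (auto simp: starlike_arc_def marc_def)
lemma hB2B2: "aa + 1 \<le> i \<Longrightarrow> aa + 1 \<le> j \<Longrightarrow> SA (k, i) (k, j) \<longleftrightarrow> MA 0 (0, aa + 1 + i) (0, aa + 1 + j)"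
  using k1 aa1 by (auto simp: starlike_arc_def marc_def)
lemma h0A: "1 \<le> j \<Longrightarrow> SA (0, 0) (k-1, j) \<longleftrightarrow> MA 0 (0, aa) (0, aa + j)"
  using k1 aa1 by (auto simp: starlike_arc_def marc_def)
lemma h0B1: "1 \<le> j \<Longrightarrow> j \<le> aa \<Longrightarrow> SA (0, 0) (k, j) \<longleftrightarrow> MA 0 (0, aa) (0, aa - j)"
  using k1 aa1 by (auto simp: starlike_arc_def marc_def)
lemma h0B2: "aa + 1 \<le> j \<Longrightarrow> SA (0, 0) (k, j) \<longleftrightarrow> MA 0 (0, aa) (0, aa + 1 + j)"
  using k1 aa1 by (auto simp: starlike_arc_def marc_def)

lemma hBA1: "1 \<le> i \<Longrightarrow> i \<le> aa + 1 \<Longrightarrow> 1 \<le> j \<Longrightarrow> j \<le> aa \<Longrightarrow> SA (k, j) (k-1, i) \<longleftrightarrow> MA 0 (0, aa - j) (0, aa + i)"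
  using hAB1 by blast
lemma hBA2: "1 \<le> i \<Longrightarrow> i \<le> aa + 1 \<Longrightarrow> aa + 1 \<le> j \<Longrightarrow> SA (k, j) (k-1, i) \<longleftrightarrow> MA 0 (0, aa + 1 + j) (0, aa + i)"
  using hAB2 by blast
lemma hB2B1: "1 \<le> i \<Longrightarrow> i \<le> aa \<Longrightarrow> aa + 1 \<le> j \<Longrightarrow> SA (k, j) (k, i) \<longleftrightarrow> MA 0 (0, aa + 1 + j) (0, aa - i)"
  using hB1B2 by blast
lemma hA0: "1 \<le> j \<Longrightarrow> SA (k-1, j) (0, 0) \<longleftrightarrow> MA 0 (0, aa + j) (0, aa)"
  using h0A by blast
lemma hB10: "1 \<le> j \<Longrightarrow> j \<le> aa \<Longrightarrow> SA (k, j) (0, 0) \<longleftrightarrow> MA 0 (0, aa - j) (0, aa)"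
  using h0B1 by blast
lemma hB20: "aa + 1 \<le> j \<Longrightarrow> SA (k, j) (0, 0) \<longleftrightarrow> MA 0 (0, aa + 1 + j) (0, aa)"
  using h0B2 by blast

lemma hQA: "u \<in> Qv \<Longrightarrow> 1 \<le> j \<Longrightarrow> SA u (k - 1, j) \<longleftrightarrow> MA e u (0, aa + j)"
  by (rule gQP) auto
lemma hQB1: "u \<in> Qv \<Longrightarrow> 1 \<le> j \<Longrightarrow> j \<le> aa \<Longrightarrow> SA u (k, j) \<longleftrightarrow> MA e u (0, aa - j)"
  by (rule gQP) auto
lemma hQB2: "u \<in> Qv \<Longrightarrow> aa + 1 \<le> j \<Longrightarrow> SA u (k, j) \<longleftrightarrow> MA e u (0, aa + 1 + j)"
  by (rule gQP) auto
lemma hAQ: "u \<in> Qv \<Longrightarrow> 1 \<le> j \<Longrightarrow> SA (k - 1, j) u \<longleftrightarrow> MA e (0, aa + j) u"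
  by (rule gPQ) auto
lemma hB1Q: "u \<in> Qv \<Longrightarrow> 1 \<le> j \<Longrightarrow> j \<le> aa \<Longrightarrow> SA (k, j) u \<longleftrightarrow> MA e (0, aa - j) u"
  by (rule gPQ) auto
lemma hB2Q: "u \<in> Qv \<Longrightarrow> aa + 1 \<le> j \<Longrightarrow> SA (k, j) u \<longleftrightarrow> MA e (0, aa + 1 + j) u"
  by (rule gPQ) auto

lemma arcH:
  assumes u: "u \<in> starlike_verts as2" and v: "v \<in> starlike_verts as2"
  shows "SA u v \<longleftrightarrow> MA 0 (fH u) (fH v)"
proof -
  have cl: "j \<le> aa \<or> aa + 1 \<le> j" for j by linarith
  have U: "u = (0, 0) \<or> u \<in> Qv \<or> (\<exists>j. u = (k - 1, j) \<and> 1 \<le> j \<and> j \<le> aa + 1)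
     \<or> (\<exists>j. u = (k, j) \<and> 1 \<le> j \<and> j \<le> aa) \<or> (\<exists>j. u = (k, j) \<and> aa + 1 \<le> j)"
    using verts_H u cl by blast
  have V: "v = (0, 0) \<or> v \<in> Qv \<or> (\<exists>j. v = (k - 1, j) \<and> 1 \<le> j \<and> j \<le> aa + 1)
     \<or> (\<exists>j. v = (k, j) \<and> 1 \<le> j \<and> j \<le> aa) \<or> (\<exists>j. v = (k, j) \<and> aa + 1 \<le> j)"
    using verts_H v cl by blast
  show ?thesis
    using U V
    apply (elim disjE exE conjE)
    apply (simp_all only: fH_0 fH_A fH_A' fH_B1 fH_B2 fH_Q hAA hAB1 hAB2 hB1B1 hB1B2 hB2B2 h0A h0B1 h0B2
       hBA1 hBA2 hB2B1 hA0 hB10 hB20 hQA hQB1 hQB2 hAQ hB1Q hB2Q g00 gQ0 g0Q gQQ)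
    done
qed


definition gG :: "nat \<times> nat \<Rightarrow> nat \<times> nat" where
  "gG v = (if fst v = 0 then (if snd v = aa then (0, 0) else if snd v < aa then (k - 1, aa - snd v)
           else (k, snd v - aa)) else v)"

definition gH :: "nat \<times> nat \<Rightarrow> nat \<times> nat" where
  "gH v = (if fst v = 0 then (if snd v = aa then (0, 0) else if snd v < aa then (k, aa - snd v)
           else if snd v \<le> 2 * aa + 1 then (k - 1, snd v - aa) else (k, snd v - aa - 1)) else v)"

lemma Qv_W: "Qv \<subseteq> Wv" by (auto simp: Wv_def)

lemma W_cases: "v \<in> Wv \<Longrightarrow> v \<in> Qv \<or> (\<exists>i. v = (0, i) \<and> i \<le> aa + bb)"
  by (auto simp: Wv_def)

lemma Qv_fst0: "v \<in> Qv \<Longrightarrow> fst v \<noteq> 0" using Qv_fst by fastforce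

lemma bijG: "bij_betw fG (starlike_verts as) Wv"
proof (rule bij_betw_byWitness[where f' = gG])
  show "\<forall>u\<in>starlike_verts as. gG (fG u) = u"
  proof
    fix u assume "u \<in> starlike_verts as"
    then consider "u = (0, 0)" | "u \<in> Qv" | j where "u = (k - 1, j)" "1 \<le> j" "j \<le> aa"
      | j where "u = (k, j)" "1 \<le> j" "j \<le> bb" using verts_G by blast
    then show "gG (fG u) = u"
      by cases (auto simp: fG_0 fG_A fG_A' fG_B fG_Q gG_def Qv_fst0)
  qed
  show "\<forall>v\<in>Wv. fG (gG v) = v"
  proof
    fix v assume "v \<in> Wv"
    then consider "v \<in> Qv" | i where "v = (0, i)" "i \<le> aa + bb" using W_cases by blast
    then show "fG (gG v) = v"
    proof cases
      case 1 then show ?thesis by (simp add: gG_def Qv_fst0 fG_Q)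
    next
      case (2 i)
      then show ?thesis by (auto simp: gG_def fG_0 fG_A fG_A' fG_B)
    qed
  qed
  show "fG ` starlike_verts as \<subseteq> Wv"
  proof
    fix w assume "w \<in> fG ` starlike_verts as"
    then obtain u where w: "w = fG u" "u \<in> starlike_verts as" by auto
    then consider "u = (0, 0)" | "u \<in> Qv" | j where "u = (k - 1, j)" "1 \<le> j" "j \<le> aa"
      | j where "u = (k, j)" "1 \<le> j" "j \<le> bb" using verts_G by blast
    then show "w \<in> Wv"
      by cases (use w Qv_W in \<open>auto simp: fG_0 fG_A fG_A' fG_B fG_Q Wv_def\<close>)
  qed
  show "gG ` Wv \<subseteq> starlike_verts as"
  proof
    fix w assume "w \<in> gG ` Wv"
    then obtain v where w: "w = gG v" "v \<in> Wv" by auto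
    then consider "v \<in> Qv" | i where "v = (0, i)" "i \<le> aa + bb" using W_cases by blast
    then show "w \<in> starlike_verts as"
    proof cases
      case 1 then show ?thesis using w verts_G by (simp add: gG_def Qv_fst0)
    next
      case (2 i)
      then show ?thesis using w verts_G[of w] by (auto simp: gG_def)
    qed
  qed
qed

lemma bijH: "bij_betw fH (starlike_verts as2) Wv"
proof (rule bij_betw_byWitness[where f' = gH])
  show "\<forall>u\<in>starlike_verts as2. gH (fH u) = u"
  proof
    fix u assume "u \<in> starlike_verts as2"
    then consider "u = (0, 0)" | "u \<in> Qv" | j where "u = (k - 1, j)" "1 \<le> j" "j \<le> aa + 1"
      | j where "u = (k, j)" "1 \<le> j" "j \<le> aa" | j where "u = (k, j)" "aa + 1 \<le> j"
    proof -
      have cl: "\<And>j::nat. j \<le> aa \<or> aa + 1 \<le> j" by linarith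
      from \<open>u \<in> starlike_verts as2\<close> verts_H cl show ?thesis using that by blast
    qed
    then show "gH (fH u) = u"
      by cases (auto simp: fH_0 fH_A fH_A' fH_B1 fH_B2 fH_Q gH_def Qv_fst0)
  qed
  show "\<forall>v\<in>Wv. fH (gH v) = v"
  proof
    fix v assume "v \<in> Wv"
    then consider "v \<in> Qv" | i where "v = (0, i)" "i \<le> aa + bb" using W_cases by blast
    then show "fH (gH v) = v"
    proof cases
      case 1 then show ?thesis by (simp add: gH_def Qv_fst0 fH_Q)
    next
      case (2 i)
      then show ?thesis by (auto simp: gH_def fH_0 fH_A fH_A' fH_B1 fH_B2)
    qed
  qed
  show "fH ` starlike_verts as2 \<subseteq> Wv"
  proof
    fix w assume "w \<in> fH ` starlike_verts as2"
    then obtain u where w: "w = fH u" "u \<in> starlike_verts as2" by auto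
    then consider "u = (0, 0)" | "u \<in> Qv" | j where "u = (k - 1, j)" "1 \<le> j" "j \<le> aa + 1"
      | j where "u = (k, j)" "1 \<le> j" "j \<le> aa" | j where "u = (k, j)" "aa + 1 \<le> j" "j \<le> bb - 1"
    proof -
      have cl: "\<And>j::nat. j \<le> aa \<or> aa + 1 \<le> j" by linarith
      from w(2) verts_H cl show ?thesis using that by blast
    qed
    then show "w \<in> Wv"
      by cases (use w Qv_W gap' in \<open>auto simp: fH_0 fH_A fH_A' fH_B1 fH_B2 fH_Q Wv_def\<close>)
  qed
  show "gH ` Wv \<subseteq> starlike_verts as2"
  proof
    fix w assume "w \<in> gH ` Wv"
    then obtain v where w: "w = gH v" "v \<in> Wv" by auto
    then consider "v \<in> Qv" | i where "v = (0, i)" "i \<le> aa + bb" using W_cases by blast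
    then show "w \<in> starlike_verts as2"
    proof cases
      case 1 then show ?thesis using w verts_H by (simp add: gH_def Qv_fst0)
    next
      case (2 i)
      then show ?thesis using w verts_H[of w] gap' by (auto simp: gH_def)
    qed
  qed
qed

lemma adjG: "u \<in> starlike_verts as \<Longrightarrow> v \<in> starlike_verts as \<Longrightarrow>
  madj (2 * aa + 1) (fG u) (fG v) = starlike_adj as u v"
  using arcG[of u v] bijG by (auto simp: madj_def starlike_adj_def bij_betw_def)

lemma adjH: "u \<in> starlike_verts as2 \<Longrightarrow> v \<in> starlike_verts as2 \<Longrightarrow>
  madj 0 (fH u) (fH v) = starlike_adj as2 u v"
  using arcH[of u v] bijH by (auto simp: madj_def starlike_adj_def bij_betw_def)

theorem star_prec: "starlike as \<prec>\<^sub>W starlike as2"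
proof -
  have "M (starlike_verts as) (starlike_adj as) L = M Wv (madj (2 * aa + 1)) L" for L
    by (rule M_iso[OF bijG]) (rule adjG)
  moreover have "M (starlike_verts as2) (starlike_adj as2) L = M Wv (madj 0) L" for L
    by (rule M_iso[OF bijH]) (rule adjH)
  ultimately show ?thesis using model_prec by (simp add: walk_prec_def starlike_def)
qed

end


theorem proposition1:
  fixes as :: "nat list" and k :: nat
  assumes "length as = k" and "k \<ge> 3"
    and "sorted as" and "\<forall>a\<in>set as. 1 \<le> a"
    and "as ! (k - 2) \<le> as ! (k - 1) - 2"
  shows "starlike as \<prec>\<^sub>W starlike (as[k - 2 := as ! (k - 2) + 1, k - 1 := as ! (k - 1) - 1])"
proof -
  have "k - 2 < length as" using assms(1,2) by simp
  then have "as ! (k - 2) \<in> set as" by (rule nth_mem)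
  then have "1 \<le> as ! (k - 2)" using assms(4) by blast
  then have gap: "as ! (k - 2) + 2 \<le> as ! (k - 1)" using assms(5) by linarith
  interpret star as k
    by unfold_locales (use assms gap in auto)
  show ?thesis using star_prec by (simp add: as2_def aa_def bb_def)
qed

end
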